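(* In the variables $(y_j,f_j)$ of the polynomial system \[ y_{j,x}=2y_jf_j-\alpha_j,\quad f_{j,x}=u-f_j^2-\lambda_j,\quad y_{j,t}=2u_xy_j-2(u+2\lambda_j)y_{j,x},\quad f_{j,t}=\bigl(u_x-2(u+2\lambda_j)f_j\bigr)_x, \] $u=\frac{x}{6t}+\frac{1}{3t}(y_1+\dots+y_n)$, the following birational maps send solutions with parameters $\alpha$ to solutions with parameters $\tilde\alpha$ (the $\lambda_j$ unchanged): $A_k$: $\tilde y_j=y_j$ for all $j$; $\tilde f_j=f_j$, $\tilde\alpha_j=\alpha_j$ for $j\neq k$; $\tilde f_k=f_k-\frac{\alpha_k}{y_k}$, $\tilde\alpha_k=-\alpha_k$. $B_k$: $\tilde f_j=-f_k-\frac{\lambda_j-\lambda_k}{f_j-f_k}$ ($j\neq k$), $\tilde f_k=-f_k$; $\tilde y_j=\frac{f_j-f_k}{\lambda_j-\lambda_k}\bigl((f_j-f_k)y_j-\alpha_j\bigr)$, $\tilde\alpha_j=\alpha_j$ ($j\neq k$); $\tilde y_k=-y_k+6t(f_k^2+\lambda_k)-x-\sum_{j\neq k}(\tilde y_j+y_j)$, $\tilde\alpha_k=1-\alpha_k$. These maps satisfy $A_k^2=\mathrm{id}$, $A_jA_k=A_kA_j$, $B_k^2=\mathrm{id}$, $B_jB_k=B_kB_j$, $A_jB_k=B_kA_j$ for $j\neq k$.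
   Context: $n\ge1$; $\lambda_1,\dots,\lambda_n$ pairwise distinct constants; $\alpha_1,\dots,\alpha_n$ constants; $k\in\{1,\dots,n\}$. Formulas are considered where denominators are nonzero. *)

theory Defs
  imports "HOL-Analysis.Analysis"
begin

text \<open>A point of the phase space: (y, f, alpha), each indexed by j in {1..n}.\<close>
type_synonym st = "(nat \<Rightarrow> complex) \<times> (nat \<Rightarrow> complex) \<times> (nat \<Rightarrow> complex)"

definition px :: "(complex \<Rightarrow> complex \<Rightarrow> complex) \<Rightarrow> complex \<Rightarrow> complex \<Rightarrow> complex" where
  "px g x t = deriv (\<lambda>s. g s t) x"
definition pt :: "(complex \<Rightarrow> complex \<Rightarrow> complex) \<Rightarrow> complex \<Rightarrow> complex \<Rightarrow> complex" where
  "pt g x t = deriv (\<lambda>s. g x s) t"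

definition uu :: "nat \<Rightarrow> (nat \<Rightarrow> complex \<Rightarrow> complex \<Rightarrow> complex) \<Rightarrow> complex \<Rightarrow> complex \<Rightarrow> complex" where
  "uu n Y x t = x / (6 * t) + (1 / (3 * t)) * (\<Sum>i\<in>{1..n}. Y i x t)"

definition is_solution ::
  "nat \<Rightarrow> (nat \<Rightarrow> complex) \<Rightarrow> (nat \<Rightarrow> complex) \<Rightarrow> (complex \<times> complex) set
   \<Rightarrow> (nat \<Rightarrow> complex \<Rightarrow> complex \<Rightarrow> complex) \<Rightarrow> (nat \<Rightarrow> complex \<Rightarrow> complex \<Rightarrow> complex) \<Rightarrow> bool" where
  "is_solution n lam a U Y F \<longleftrightarrow>
    (\<forall>j\<in>{1..n}. \<forall>(x,t)\<in>U.
       (\<lambda>s. Y j s t) field_differentiable (at x) \<and>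
       (\<lambda>s. Y j x s) field_differentiable (at t) \<and>
       (\<lambda>s. F j s t) field_differentiable (at x) \<and>
       (\<lambda>s. F j x s) field_differentiable (at t) \<and>
       px (Y j) x t = 2 * Y j x t * F j x t - a j \<and>
       px (F j) x t = uu n Y x t - (F j x t)\<^sup>2 - lam j \<and>
       pt (Y j) x t = 2 * px (uu n Y) x t * Y j x t - 2 * (uu n Y x t + 2 * lam j) * px (Y j) x t \<and>
       ((\<lambda>s. px (uu n Y) s t - 2 * (uu n Y s t + 2 * lam j) * F j s t)
          has_field_derivative pt (F j) x t) (at x))"

definition A_map :: "nat \<Rightarrow> st \<Rightarrow> st" where
  "A_map k s = (case s of (y, f, a) \<Rightarrow> (y, f(k := f k - a k / y k), a(k := - a k)))"

definition A_ok :: "nat \<Rightarrow> st \<Rightarrow> bool" where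
  "A_ok k s = (fst s k \<noteq> 0)"

definition B_map :: "nat \<Rightarrow> (nat \<Rightarrow> complex) \<Rightarrow> nat \<Rightarrow> complex \<Rightarrow> complex \<Rightarrow> st \<Rightarrow> st" where
  "B_map n lam k x t s = (case s of (y, f, a) \<Rightarrow>
     (let yo = (\<lambda>j. (f j - f k) / (lam j - lam k) * ((f j - f k) * y j - a j))
      in (yo(k := - y k + 6 * t * ((f k)\<^sup>2 + lam k) - x - (\<Sum>j\<in>{1..n} - {k}. yo j + y j)),
          (\<lambda>j. - f k - (lam j - lam k) / (f j - f k))(k := - f k),
          a(k := 1 - a k))))"

text \<open>Denominators of B_k nonzero (the lambdas are assumed pairwise distinct separately).\<close>
definition B_ok :: "nat \<Rightarrow> nat \<Rightarrow> st \<Rightarrow> bool" where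
  "B_ok n k s = (\<forall>j\<in>{1..n} - {k}. fst (snd s) j \<noteq> fst (snd s) k)"

definition eq_on :: "nat \<Rightarrow> st \<Rightarrow> st \<Rightarrow> bool" where
  "eq_on n s s' = (\<forall>j\<in>{1..n}. fst s j = fst s' j \<and> fst (snd s) j = fst (snd s') j
                              \<and> snd (snd s) j = snd (snd s') j)"

definition trY :: "(complex \<Rightarrow> complex \<Rightarrow> st \<Rightarrow> st) \<Rightarrow> (nat \<Rightarrow> complex)
   \<Rightarrow> (nat \<Rightarrow> complex \<Rightarrow> complex \<Rightarrow> complex) \<Rightarrow> (nat \<Rightarrow> complex \<Rightarrow> complex \<Rightarrow> complex)
   \<Rightarrow> nat \<Rightarrow> complex \<Rightarrow> complex \<Rightarrow> complex" where
  "trY M a Y F j x t = fst (M x t (\<lambda>i. Y i x t, \<lambda>i. F i x t, a)) j"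
definition trF :: "(complex \<Rightarrow> complex \<Rightarrow> st \<Rightarrow> st) \<Rightarrow> (nat \<Rightarrow> complex)
   \<Rightarrow> (nat \<Rightarrow> complex \<Rightarrow> complex \<Rightarrow> complex) \<Rightarrow> (nat \<Rightarrow> complex \<Rightarrow> complex \<Rightarrow> complex)
   \<Rightarrow> nat \<Rightarrow> complex \<Rightarrow> complex \<Rightarrow> complex" where
  "trF M a Y F j x t = fst (snd (M x t (\<lambda>i. Y i x t, \<lambda>i. F i x t, a))) j"

end

theory Submission
  imports Defs
begin



context
  fixes Fi Fk Yi ai li lk u ux uxx :: complex
  assumes D: "Fi - Fk \<noteq> 0" and L: "li - lk \<noteq> 0"
begin

lemma iD: "inverse (Fi - Fk) * (Fi - Fk) = 1" using D by simp
lemma iL: "inverse (li - lk) * (li - lk) = 1" using L by simp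

lemma algTx1: "((u - Fi\<^sup>2 - li) - (u - Fk\<^sup>2 - lk))/(li - lk) * ((Fi - Fk)*Yi - ai) + (Fi - Fk)/(li - lk) * (((u - Fi\<^sup>2 - li) - (u - Fk\<^sup>2 - lk))*Yi + (Fi - Fk)*(2*Yi*Fi - ai))
   = 2*((Fi - Fk)/(li - lk)*((Fi - Fk)*Yi - ai))*(-Fk - (li - lk)/(Fi - Fk)) - ai"
  unfolding divide_inverse power2_eq_square using iD iL by algebra

lemma algTx2: "-(u - Fk\<^sup>2 - lk) + (li - lk)*((u - Fi\<^sup>2 - li) - (u - Fk\<^sup>2 - lk))/(Fi - Fk)\<^sup>2
   = (-u + 2*Fk\<^sup>2 + 2*lk) - (-Fk - (li - lk)/(Fi - Fk))\<^sup>2 - li"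
proof -
  have D2: "(Fi - Fk)^2 \<noteq> 0" using D by simp
  show ?thesis unfolding divide_inverse power2_eq_square inverse_mult_distrib using iD iL by algebra
qed

lemma algSx: "(2*((Fi - Fk)/(li - lk)*((Fi - Fk)*Yi - ai))*(-Fk - (li - lk)/(Fi - Fk)) - ai) + (2*Yi*Fi - ai)
   = -2*Fk*((Fi - Fk)/(li - lk)*((Fi - Fk)*Yi - ai)) + 2*Fk*Yi"
  unfolding divide_inverse power2_eq_square using iD iL by algebra

lemma algTt1:
  "let Dt = (uxx - 2*(ux*Fi + (u+2*li)*(u - Fi\<^sup>2 - li))) - (uxx - 2*(ux*Fk + (u+2*lk)*(u - Fk\<^sup>2 - lk)));
       Yit = 2*ux*Yi - 2*(u+2*li)*(2*Yi*Fi - ai);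
       uN = -u + 2*Fk\<^sup>2 + 2*lk; uxN = -ux + 4*Fk*(u - Fk\<^sup>2 - lk);
       yo = (Fi - Fk)/(li - lk)*((Fi - Fk)*Yi - ai); FB = -Fk - (li - lk)/(Fi - Fk)
   in Dt/(li - lk)*((Fi - Fk)*Yi - ai) + (Fi - Fk)/(li - lk)*(Dt*Yi + (Fi - Fk)*Yit)
      = 2*uxN*yo - 2*(uN + 2*li)*(2*yo*FB - ai)"
  unfolding Let_def unfolding divide_inverse power2_eq_square using iD iL by algebra

lemma algTt2:
  "let Dt = (uxx - 2*(ux*Fi + (u+2*li)*(u - Fi\<^sup>2 - li))) - (uxx - 2*(ux*Fk + (u+2*lk)*(u - Fk\<^sup>2 - lk)));
       ftk = uxx - 2*(ux*Fk + (u+2*lk)*(u - Fk\<^sup>2 - lk));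
       uN = -u + 2*Fk\<^sup>2 + 2*lk; uxN = -ux + 4*Fk*(u - Fk\<^sup>2 - lk);
       uxxN = -uxx + 4*((u - Fk\<^sup>2 - lk)\<^sup>2 + Fk*(ux - 2*Fk*(u - Fk\<^sup>2 - lk)));
       FB = -Fk - (li - lk)/(Fi - Fk)
   in -ftk + (li - lk)*Dt/(Fi - Fk)\<^sup>2 = uxxN - 2*(uxN*FB + (uN + 2*li)*(uN - FB\<^sup>2 - li))"
proof -
  have D2: "(Fi - Fk)^2 \<noteq> 0" using D by simp
  show ?thesis unfolding Let_def unfolding divide_inverse power2_eq_square inverse_mult_distrib using iD iL by algebra
qed

lemma algSt:
  "let uN = -u + 2*Fk\<^sup>2 + 2*lk; uxN = -ux + 4*Fk*(u - Fk\<^sup>2 - lk);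
       yo = (Fi - Fk)/(li - lk)*((Fi - Fk)*Yi - ai); FB = -Fk - (li - lk)/(Fi - Fk)
   in 2*uxN*yo - 2*(uN + 2*li)*(2*yo*FB - ai)
      = 2*uxN*yo + 4*(uN + 2*lk)*Fk*yo + 2*(4*Fk*(Fi - Fk)*((Fi - Fk)*Yi - ai) + ((uN + 2*lk) + 2*(li - lk))*(2*(Fi - Fk)*Yi - ai))"
  unfolding Let_def unfolding divide_inverse power2_eq_square using iD iL by algebra

end

lemma algKt2:
  fixes Fk lk u ux uxx :: complex
  shows "-(uxx - 2*(ux*Fk + (u+2*lk)*(u - Fk\<^sup>2 - lk)))
    = (-uxx + 4*((u - Fk\<^sup>2 - lk)\<^sup>2 + Fk*(ux - 2*Fk*(u - Fk\<^sup>2 - lk)))) - 2*((-ux + 4*Fk*(u - Fk\<^sup>2 - lk))*(-Fk) + ((-u + 2*Fk\<^sup>2 + 2*lk) + 2*lk)*((-u + 2*Fk\<^sup>2 + 2*lk) - (-Fk)\<^sup>2 - lk))"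
  by algebra



lemma algP1:
  fixes t x u Y F la Q B1 :: complex
  assumes t: "t \<noteq> 0" and hu: "u = x/(6*t) + (1/(3*t))*(Y + B1)"
  shows "x/(6*t) + (1/(3*t))*((-Y + 6*t*(F\<^sup>2+la) - x - (Q + B1)) + Q) = -u + 2*F\<^sup>2 + 2*la"
proof -
  have hx: "x = 6*t*u - 2*Y - 2*B1" using t unfolding hu by (simp add: field_simps)
  show ?thesis unfolding hx using t by (simp add: field_simps)
qed

lemma algKx1:
  fixes t x u Y F la Q B1 al :: complex
  assumes t: "t \<noteq> 0" and hu: "u = x/(6*t) + (1/(3*t))*(Y + B1)"
  shows "-(2*Y*F - al) + 6*t*(2*F*(u - F\<^sup>2 - la)) - 1 - (-2*F*Q + 2*F*B1) = 2*(-Y + 6*t*(F\<^sup>2+la) - x - (Q + B1))*(-F) - (1 - al)"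
proof -
  have hx: "x = 6*t*u - 2*Y - 2*B1" using t unfolding hu by (simp add: field_simps)
  show ?thesis unfolding hx by algebra
qed



lemma algKt1:
  fixes t x u ux uxx Y F al la Q B1 B2 B3 B4 B5 B6 B7 B8 :: complex
  assumes t: "t \<noteq> 0"
  and hu: "u = x/(6*t) + (1/(3*t))*(Y + B1)"
  and hux: "ux = 1/(6*t) + (1/(3*t))*((2*Y*F - al) + (2*B2 - B3))"
  and huxx: "uxx = (1/(3*t))*(2*((2*Y*F-al)*F + Y*(u - F\<^sup>2 - la)) + 2*(B4 - B5 + u*B1 - B6))"
  shows "let Ytk = 2*ux*Y - 2*(u+2*la)*(2*Y*F - al); Ftk = uxx - 2*(ux*F + (u+2*la)*(u - F\<^sup>2 - la));
     uN = -u + 2*F\<^sup>2 + 2*la; uxN = -ux + 4*F*(u - F\<^sup>2 - la); W = uN + 2*la;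
     S4 = 2*(4*F*(B4 - 2*F*B2 + F\<^sup>2*B1 - B5 + F*B3) + W*(2*B2 - 2*F*B1 - B3)
          + 2*(2*B7 - 2*F*B6 - B8 - la*(2*B2 - 2*F*B1 - B3)));
     SYt = 2*ux*B1 - 2*u*(2*B2 - B3) - 4*(2*B7 - B8);
     YBk = -Y + 6*t*(F\<^sup>2+la) - x - (Q + B1)
   in -Ytk + 6*(F\<^sup>2+la) + 6*t*(2*F*Ftk) - ((2*uxN + 4*W*F)*Q + S4 + SYt)
      = 2*uxN*YBk - 2*(uN + 2*la)*(2*YBk*(-F) - (1-al))"
proof -
  have hx: "x = 6*t*u - 2*Y - 2*B1" using t unfolding hu by (simp add: field_simps)
  have ux: "ux = (1 + 2*(2*Y*F - al) + 4*B2 - 2*B3)/(6*t)" using t unfolding hux by (simp add: field_simps)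
  have uxx: "uxx = (2*((2*Y*F-al)*F + Y*(u - F\<^sup>2 - la)) + 2*(B4 - B5 + u*B1 - B6))/(3*t)" using t unfolding huxx by (simp add: field_simps)
  show ?thesis unfolding Let_def ux uxx hx using t by (simp add: field_simps) (simp add: algebra_simps power2_eq_square power3_eq_cube)
qed


lemma conv1:
  fixes f y a l :: "nat \<Rightarrow> complex" and S :: "nat set" and Fk W lk :: complex
  shows "(\<Sum>i\<in>S. 2*(4*Fk*(f i - Fk)*((f i - Fk)*y i - a i) + (W + 2*(l i - lk))*(2*(f i - Fk)*y i - a i)))
   = 2*(4*Fk*((\<Sum>i\<in>S. (f i)^2 * y i) - 2*Fk*(\<Sum>i\<in>S. f i * y i) + Fk^2*(\<Sum>i\<in>S. y i) - (\<Sum>i\<in>S. f i * a i) + Fk*(\<Sum>i\<in>S. a i))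
      + W*(2*(\<Sum>i\<in>S. f i * y i) - 2*Fk*(\<Sum>i\<in>S. y i) - (\<Sum>i\<in>S. a i))
      + 2*(2*(\<Sum>i\<in>S. l i * f i * y i) - 2*Fk*(\<Sum>i\<in>S. l i * y i) - (\<Sum>i\<in>S. l i * a i) - lk*(2*(\<Sum>i\<in>S. f i * y i) - 2*Fk*(\<Sum>i\<in>S. y i) - (\<Sum>i\<in>S. a i))))"
proof (induct S rule: infinite_finite_induct)
  case (insert i S)
  show ?case unfolding sum.insert[OF insert(1,2)] using insert(3) by algebra
qed simp_all
lemma conv2:
  fixes f y a l :: "nat \<Rightarrow> complex" and S :: "nat set" and u ux :: complex
  shows "(\<Sum>i\<in>S. 2*ux*y i - 2*(u + 2*l i)*(2*y i*f i - a i))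
   = 2*ux*(\<Sum>i\<in>S. y i) - 2*u*(2*(\<Sum>i\<in>S. f i * y i) - (\<Sum>i\<in>S. a i)) - 4*(2*(\<Sum>i\<in>S. l i * f i * y i) - (\<Sum>i\<in>S. l i * a i))"
proof (induct S rule: infinite_finite_induct)
  case (insert i S)
  show ?case unfolding sum.insert[OF insert(1,2)] using insert(3) by algebra
qed simp_all
lemma conv3:
  fixes f y a l :: "nat \<Rightarrow> complex" and S :: "nat set" and u :: complex
  shows "(\<Sum>i\<in>S. 2*((2*y i*f i - a i)*f i + y i*(u - (f i)^2 - l i)))
   = 2*((\<Sum>i\<in>S. (f i)^2 * y i) - (\<Sum>i\<in>S. f i * a i) + u*(\<Sum>i\<in>S. y i) - (\<Sum>i\<in>S. l i * y i))"
proof (induct S rule: infinite_finite_induct)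
  case (insert i S)
  show ?case unfolding sum.insert[OF insert(1,2)] using insert(3) by algebra
qed simp_all
lemma conv4:
  fixes f y a :: "nat \<Rightarrow> complex" and S :: "nat set"
  shows "(\<Sum>i\<in>S. 2*y i*f i - a i) = 2*(\<Sum>i\<in>S. f i * y i) - (\<Sum>i\<in>S. a i)"
  by (simp add: algebra_simps sum.distrib sum_subtractf sum_distrib_left)



lemma invI: "(z::complex) \<noteq> 0 \<Longrightarrow> inverse z * z = 1" by simp

lemma algC1:
  fixes fi fj fk li lj lk :: complex
  assumes A: "fi - fk \<noteq> 0" and B: "fj - fk \<noteq> 0" and C: "fi - fj \<noteq> 0"
    and N1: "(-fk - (li-lk)/(fi-fk)) - (-fk - (lj-lk)/(fj-fk)) \<noteq> 0"
    and N2: "(-fj - (li-lj)/(fi-fj)) - (-fj - (lk-lj)/(fk-fj)) \<noteq> 0"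
  shows "-(-fk - (lj-lk)/(fj-fk)) - (li - lj)/((-fk - (li-lk)/(fi-fk)) - (-fk - (lj-lk)/(fj-fk)))
       = -(-fj - (lk-lj)/(fk-fj)) - (li - lk)/((-fj - (li-lj)/(fi-fj)) - (-fj - (lk-lj)/(fk-fj)))"
proof -
  have B': "fk - fj \<noteq> 0" using B by (simp add: eq_iff_diff_eq_0[symmetric])
  note f = invI[OF A] invI[OF B] invI[OF C] invI[OF B'] invI[OF N1] invI[OF N2]
  show ?thesis using f unfolding divide_inverse by algebra
qed

lemma algC2:
  fixes fi fj fk li lj lk yi ai :: complex
  assumes A: "fi - fk \<noteq> 0" and B: "fj - fk \<noteq> 0" and C: "fi - fj \<noteq> 0"
    and Lij: "li - lj \<noteq> 0" and Lik: "li - lk \<noteq> 0" and Ljk: "lj - lk \<noteq> 0"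
  shows "((-fk - (li-lk)/(fi-fk)) - (-fk - (lj-lk)/(fj-fk)))/(li - lj) * (((-fk - (li-lk)/(fi-fk)) - (-fk - (lj-lk)/(fj-fk))) * ((fi - fk)/(li - lk)*((fi - fk)*yi - ai)) - ai)
       = ((-fj - (li-lj)/(fi-fj)) - (-fj - (lk-lj)/(fk-fj)))/(li - lk) * (((-fj - (li-lj)/(fi-fj)) - (-fj - (lk-lj)/(fk-fj))) * ((fi - fj)/(li - lj)*((fi - fj)*yi - ai)) - ai)"
proof -
  have B': "fk - fj \<noteq> 0" using B by (simp add: eq_iff_diff_eq_0[symmetric])
  note f = invI[OF A] invI[OF B] invI[OF C] invI[OF B'] invI[OF Lij] invI[OF Lik] invI[OF Ljk]
  show ?thesis using f unfolding divide_inverse by algebra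
qed

lemma algC3:
  fixes fi fj fk li lj lk yi ai :: complex
  assumes A: "fi - fk \<noteq> 0" and B: "fj - fk \<noteq> 0" and C: "fi - fj \<noteq> 0"
    and Lij: "li - lj \<noteq> 0" and Lik: "li - lk \<noteq> 0" and Ljk: "lj - lk \<noteq> 0"
  shows "(lj - lk)/(fj - fk)\<^sup>2 * ((fi - fk)/(li - lk)*((fi - fk)*yi - ai) - (fi - fj)/(li - lj)*((fi - fj)*yi - ai))
     + ((-fk - (li-lk)/(fi-fk)) - (-fk - (lj-lk)/(fj-fk)))/(li - lj) * (((-fk - (li-lk)/(fi-fk)) - (-fk - (lj-lk)/(fj-fk))) * ((fi - fk)/(li - lk)*((fi - fk)*yi - ai)) - ai)
     = yi"
proof -
  note f = invI[OF A] invI[OF B] invI[OF C] invI[OF Lij] invI[OF Lik] invI[OF Ljk]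
  show ?thesis using f unfolding divide_inverse power2_eq_square inverse_mult_distrib by algebra
qed

lemma algC4:
  fixes fj fk lj lk :: complex
  assumes B: "fj - fk \<noteq> 0" and Ljk: "lj - lk \<noteq> 0"
  shows "-(-fk - (lj-lk)/(fj-fk)) = -(-fj - (lk-lj)/(fk-fj)) - (lj - lk)/((-fj) - (-fj - (lk-lj)/(fk-fj)))"
proof -
  have B': "fk - fj \<noteq> 0" using B by (simp add: eq_iff_diff_eq_0[symmetric])
  have N: "(-fj) - (-fj - (lk-lj)/(fk-fj)) \<noteq> 0" using B' Ljk by simp
  note f = invI[OF B] invI[OF B'] invI[OF Ljk] invI[OF N]
  show ?thesis using f unfolding divide_inverse by algebra
qed

lemma algC5:
  fixes fj fk yj yk aj ak lj lk x t P Pk Pj Z :: complex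
  assumes B: "fj - fk \<noteq> 0" and Ljk: "lj - lk \<noteq> 0"
    and HZ: "Z = P - (lj - lk)/(fj - fk)\<^sup>2 * (Pk - Pj)"
  shows "-((fj - fk)/(lj - lk) * ((fj - fk)*yj - aj)) + 6*t*((-fk - (lj - lk)/(fj - fk))\<^sup>2 + lj) - x
      - ((((-fk) - (-fk - (lj - lk)/(fj - fk)))/(lk - lj) * (((-fk) - (-fk - (lj - lk)/(fj - fk)))
            * (-yk + 6*t*(fk\<^sup>2+lk) - x - ((((fj - fk)/(lj - lk) * ((fj - fk)*yj - aj)) + yj) + (Pk + P))) - (1 - ak))
          + (-yk + 6*t*(fk\<^sup>2+lk) - x - ((((fj - fk)/(lj - lk) * ((fj - fk)*yj - aj)) + yj) + (Pk + P))))
         + (Z + Pk))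
    = ((-fj) - (-fj - (lk - lj)/(fk - fj)))/(lj - lk) * (((-fj) - (-fj - (lk - lj)/(fk - fj)))
        * (-yj + 6*t*(fj\<^sup>2+lj) - x - ((((fk - fj)/(lk - lj)*((fk - fj)*yk - ak)) + yk) + (Pj + P))) - (1 - aj))"
proof -
  have B': "fk - fj \<noteq> 0" using B by (simp add: eq_iff_diff_eq_0[symmetric])
  have Lkj: "lk - lj \<noteq> 0" using Ljk by (simp add: eq_iff_diff_eq_0[symmetric])
  note f = invI[OF B] invI[OF B'] invI[OF Ljk] invI[OF Lkj]
  show ?thesis using f unfolding HZ divide_inverse power2_eq_square inverse_mult_distrib by algebra
qed



definition uxF :: "nat \<Rightarrow> (nat \<Rightarrow> complex) \<Rightarrow> (nat \<Rightarrow> complex \<Rightarrow> complex \<Rightarrow> complex) \<Rightarrow> (nat \<Rightarrow> complex \<Rightarrow> complex \<Rightarrow> complex) \<Rightarrow> complex \<Rightarrow> complex \<Rightarrow> complex" where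
  "uxF n a Y F x t = 1/(6*t) + (1/(3*t)) * (\<Sum>i\<in>{1..n}. 2 * Y i x t * F i x t - a i)"

definition uxxF :: "nat \<Rightarrow> (nat \<Rightarrow> complex) \<Rightarrow> (nat \<Rightarrow> complex) \<Rightarrow> (nat \<Rightarrow> complex \<Rightarrow> complex \<Rightarrow> complex) \<Rightarrow> (nat \<Rightarrow> complex \<Rightarrow> complex \<Rightarrow> complex) \<Rightarrow> complex \<Rightarrow> complex \<Rightarrow> complex" where
  "uxxF n lam a Y F x t = (1/(3*t)) * (\<Sum>i\<in>{1..n}. 2 * ((2 * Y i x t * F i x t - a i) * F i x t + Y i x t * (uu n Y x t - (F i x t)\<^sup>2 - lam i)))"

definition ftF where
  "ftF n lam a Y F j x t = uxxF n lam a Y F x t - 2 * (uxF n a Y F x t * F j x t + (uu n Y x t + 2 * lam j) * (uu n Y x t - (F j x t)\<^sup>2 - lam j))"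

definition ytF where
  "ytF n lam a Y F j x t = 2 * uxF n a Y F x t * Y j x t - 2 * (uu n Y x t + 2 * lam j) * (2 * Y j x t * F j x t - a j)"

definition xsol where
  "xsol n lam a U Y F \<longleftrightarrow> (\<forall>j\<in>{1..n}. \<forall>(x,t)\<in>U.
     ((\<lambda>s. Y j s t) has_field_derivative (2 * Y j x t * F j x t - a j)) (at x) \<and>
     ((\<lambda>s. F j s t) has_field_derivative (uu n Y x t - (F j x t)\<^sup>2 - lam j)) (at x))"

definition sol2 where
  "sol2 n lam a U Y F \<longleftrightarrow> xsol n lam a U Y F \<and> (\<forall>j\<in>{1..n}. \<forall>(x,t)\<in>U.
     ((\<lambda>s. Y j x s) has_field_derivative ytF n lam a Y F j x t) (at t) \<and>
     ((\<lambda>s. F j x s) has_field_derivative ftF n lam a Y F j x t) (at t))"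

lemma open_slice:
  assumes "open (U::(complex*complex) set)" shows "open {s. (s,t) \<in> U}"
proof -
  have "open ((\<lambda>s. (s,t)) -` U)"
    using continuous_open_vimage[OF assms, of "\<lambda>s. (s,t)"] by (simp add: continuous_Pair)
  then show ?thesis by (simp add: vimage_def)
qed

lemma xsolD:
  assumes "xsol n lam a U Y F" "j \<in> {1..n}" "(x,t) \<in> U"
  shows "((\<lambda>s. Y j s t) has_field_derivative (2 * Y j x t * F j x t - a j)) (at x)"
    "((\<lambda>s. F j s t) has_field_derivative (uu n Y x t - (F j x t)\<^sup>2 - lam j)) (at x)"
  using assms unfolding xsol_def by fastforce+

lemma uu_deriv:
  assumes "xsol n lam a U Y F" "(x,t) \<in> U" "t \<noteq> 0"
  shows "((\<lambda>s. uu n Y s t) has_field_derivative uxF n a Y F x t) (at x)"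
proof -
  have "((\<lambda>s. s / (6 * t) + (1 / (3 * t)) * (\<Sum>i\<in>{1..n}. Y i s t)) has_field_derivative
         1/(6*t) + (1/(3*t)) * (\<Sum>i\<in>{1..n}. 2 * Y i x t * F i x t - a i)) (at x)"
    by (intro derivative_eq_intros DERIV_sum) (auto intro: xsolD(1)[OF assms(1) _ assms(2)] simp: assms(3))
  then show ?thesis unfolding uu_def uxF_def .
qed

lemma uxF_deriv:
  assumes "xsol n lam a U Y F" "(x,t) \<in> U"
  shows "((\<lambda>s. uxF n a Y F s t) has_field_derivative uxxF n lam a Y F x t) (at x)"
proof -
  have "((\<lambda>s. 1/(6*t) + (1/(3*t)) * (\<Sum>i\<in>{1..n}. 2 * Y i s t * F i s t - a i)) has_field_derivative
         (1/(3*t)) * (\<Sum>i\<in>{1..n}. 2 * ((2 * Y i x t * F i x t - a i) * F i x t + Y i x t * (uu n Y x t - (F i x t)\<^sup>2 - lam i)))) (at x)"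
  proof -
    have "((\<lambda>s. \<Sum>i\<in>{1..n}. 2 * Y i s t * F i s t - a i) has_field_derivative
       (\<Sum>i\<in>{1..n}. 2 * ((2 * Y i x t * F i x t - a i) * F i x t + Y i x t * (uu n Y x t - (F i x t)\<^sup>2 - lam i)))) (at x)"
    proof (rule DERIV_sum)
      fix i assume i: "i \<in> {1..n}"
      show "((\<lambda>s. 2 * Y i s t * F i s t - a i) has_field_derivative
       2 * ((2 * Y i x t * F i x t - a i) * F i x t + Y i x t * (uu n Y x t - (F i x t)\<^sup>2 - lam i))) (at x)"
        by (rule derivative_eq_intros xsolD[OF assms(1) i assms(2)] refl)+ (simp add: algebra_simps)
    qed
    from DERIV_add[OF DERIV_const[of "1/(6*t)"] DERIV_cmult[OF this, of "1/(3*t)"]]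
    show ?thesis by simp
  qed
  then show ?thesis unfolding uxF_def uxxF_def .
qed

lemma px_uu:
  assumes "xsol n lam a U Y F" "(x,t) \<in> U" "t \<noteq> 0"
  shows "px (uu n Y) x t = uxF n a Y F x t"
  unfolding px_def using uu_deriv[OF assms] by (rule DERIV_imp_deriv)

lemma pxuu_deriv:
  assumes "xsol n lam a U Y F" "(x,t) \<in> U" "open U" "t \<noteq> 0"
  shows "((\<lambda>s. px (uu n Y) s t) has_field_derivative uxxF n lam a Y F x t) (at x)"
  by (rule has_field_derivative_transform_within_open[OF uxF_deriv[OF assms(1,2)] open_slice[OF assms(3)]])
     (use assms in \<open>auto simp: px_uu[OF assms(1)]\<close>)

lemma ft_deriv:
  assumes "xsol n lam a U Y F" "(x,t) \<in> U" "open U" "j \<in> {1..n}" "t \<noteq> 0"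
  shows "((\<lambda>s. px (uu n Y) s t - 2 * (uu n Y s t + 2 * lam j) * F j s t) has_field_derivative
     ftF n lam a Y F j x t) (at x)"
  unfolding ftF_def
  by (rule derivative_eq_intros pxuu_deriv[OF assms(1-3) assms(5)] uu_deriv[OF assms(1,2,5)] xsolD(2)[OF assms(1,4,2)] refl)+
     (simp add: algebra_simps)

lemma char:
  assumes "open U" "\<forall>(x,t)\<in>U. t \<noteq> 0"
  shows "is_solution n lam a U Y F \<longleftrightarrow> sol2 n lam a U Y F"
proof
  assume S: "is_solution n lam a U Y F"
  have X: "xsol n lam a U Y F"
    unfolding xsol_def
  proof (intro ballI, clarify)
    fix j x t assume j: "j \<in> {1..n}" and xt: "(x,t) \<in> U"
    from S j xt have d: "(\<lambda>s. Y j s t) field_differentiable (at x)" "(\<lambda>s. F j s t) field_differentiable (at x)"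
      and e: "px (Y j) x t = 2 * Y j x t * F j x t - a j" "px (F j) x t = uu n Y x t - (F j x t)\<^sup>2 - lam j"
      unfolding is_solution_def by fastforce+
    show "((\<lambda>s. Y j s t) has_field_derivative (2 * Y j x t * F j x t - a j)) (at x) \<and>
     ((\<lambda>s. F j s t) has_field_derivative (uu n Y x t - (F j x t)\<^sup>2 - lam j)) (at x)"
      using d e unfolding px_def by (simp add: DERIV_deriv_iff_field_differentiable[symmetric])
  qed
  show "sol2 n lam a U Y F"
    unfolding sol2_def
  proof (intro conjI X ballI, clarify)
    fix j x t assume j: "j \<in> {1..n}" and xt: "(x,t) \<in> U"
    have t0: "t \<noteq> 0" using assms(2) xt by auto
    from S j xt have d: "(\<lambda>s. Y j x s) field_differentiable (at t)" "(\<lambda>s. F j x s) field_differentiable (at t)"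
      and e: "px (Y j) x t = 2 * Y j x t * F j x t - a j"
        "pt (Y j) x t = 2 * px (uu n Y) x t * Y j x t - 2 * (uu n Y x t + 2 * lam j) * px (Y j) x t"
        "((\<lambda>s. px (uu n Y) s t - 2 * (uu n Y s t + 2 * lam j) * F j s t) has_field_derivative pt (F j) x t) (at x)"
      unfolding is_solution_def by fastforce+
    have "pt (F j) x t = ftF n lam a Y F j x t"
      using DERIV_unique[OF e(3) ft_deriv[OF X xt assms(1) j t0]] .
    moreover have "pt (Y j) x t = ytF n lam a Y F j x t"
      using e(1,2) px_uu[OF X xt t0] unfolding ytF_def by simp
    ultimately show "((\<lambda>s. Y j x s) has_field_derivative ytF n lam a Y F j x t) (at t) \<and>
     ((\<lambda>s. F j x s) has_field_derivative ftF n lam a Y F j x t) (at t)"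
      using d unfolding pt_def by (simp add: DERIV_deriv_iff_field_differentiable[symmetric])
  qed
next
  assume S: "sol2 n lam a U Y F"
  then have X: "xsol n lam a U Y F" by (simp add: sol2_def)
  show "is_solution n lam a U Y F"
    unfolding is_solution_def
  proof (intro ballI, clarify)
    fix j x t assume j: "j \<in> {1..n}" and xt: "(x,t) \<in> U"
    have t0: "t \<noteq> 0" using assms(2) xt by auto
    have dx: "((\<lambda>s. Y j s t) has_field_derivative (2 * Y j x t * F j x t - a j)) (at x)"
      "((\<lambda>s. F j s t) has_field_derivative (uu n Y x t - (F j x t)\<^sup>2 - lam j)) (at x)"
      using xsolD[OF X j xt] by auto
    have dt: "((\<lambda>s. Y j x s) has_field_derivative ytF n lam a Y F j x t) (at t)"
      "((\<lambda>s. F j x s) has_field_derivative ftF n lam a Y F j x t) (at t)"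
      using S j xt unfolding sol2_def by fastforce+
    have pY: "px (Y j) x t = 2 * Y j x t * F j x t - a j" unfolding px_def by (rule DERIV_imp_deriv[OF dx(1)])
    have pF: "px (F j) x t = uu n Y x t - (F j x t)\<^sup>2 - lam j" unfolding px_def by (rule DERIV_imp_deriv[OF dx(2)])
    have tY: "pt (Y j) x t = ytF n lam a Y F j x t" unfolding pt_def by (rule DERIV_imp_deriv[OF dt(1)])
    have tF: "pt (F j) x t = ftF n lam a Y F j x t" unfolding pt_def by (rule DERIV_imp_deriv[OF dt(2)])
    show "(\<lambda>s. Y j s t) field_differentiable at x \<and>
       (\<lambda>s. Y j x s) field_differentiable at t \<and>
       (\<lambda>s. F j s t) field_differentiable at x \<and>
       (\<lambda>s. F j x s) field_differentiable at t \<and>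
       px (Y j) x t = 2 * Y j x t * F j x t - a j \<and>
       px (F j) x t = uu n Y x t - (F j x t)\<^sup>2 - lam j \<and>
       pt (Y j) x t = 2 * px (uu n Y) x t * Y j x t - 2 * (uu n Y x t + 2 * lam j) * px (Y j) x t \<and>
       ((\<lambda>s. px (uu n Y) s t - 2 * (uu n Y s t + 2 * lam j) * F j s t) has_field_derivative pt (F j) x t) (at x)"
      using dx dt pY pF tY tF ft_deriv[OF X xt assms(1) j t0] px_uu[OF X xt t0]
      unfolding field_differentiable_def ytF_def by (intro conjI; (blast | simp))
  qed
qed



definition FA :: "nat \<Rightarrow> (nat \<Rightarrow> complex) \<Rightarrow> (nat \<Rightarrow> complex \<Rightarrow> complex \<Rightarrow> complex) \<Rightarrow> (nat \<Rightarrow> complex \<Rightarrow> complex \<Rightarrow> complex) \<Rightarrow> nat \<Rightarrow> complex \<Rightarrow> complex \<Rightarrow> complex" where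
  "FA k a Y F = (\<lambda>j x t. if j = k then F k x t - a k / Y k x t else F j x t)"

lemma FA_k[simp]: "FA k a Y F k x t = F k x t - a k / Y k x t" by (simp add: FA_def)
lemma FA_nk[simp]: "j \<noteq> k \<Longrightarrow> FA k a Y F j x t = F j x t" by (simp add: FA_def)

lemma algA:
  fixes Y F a u ux uxx l :: complex
  assumes "Y \<noteq> 0"
  shows "uxx - 2*(ux*(F - a/Y) + (u+2*l)*(u - (F - a/Y)\<^sup>2 - l)) = uxx - 2*(ux*F + (u+2*l)*(u - F\<^sup>2 - l)) + a*(2*ux*Y - 2*(u+2*l)*(2*Y*F - a))/Y\<^sup>2"
  using assms by (simp add: field_simps power2_eq_square)

lemma algA2:
  fixes Y F a u l :: complex
  assumes "Y \<noteq> 0"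
  shows "2*((2*Y*(F - a/Y) - (-a))*(F - a/Y) + Y*(u - (F - a/Y)\<^sup>2 - l)) = 2*((2*Y*F - a)*F + Y*(u - F\<^sup>2 - l))"
  using assms by (simp add: field_simps power2_eq_square)

lemma algA3:
  fixes Y F a u l :: complex
  assumes "Y \<noteq> 0"
  shows "(u - F\<^sup>2 - l) + a*(2*Y*F - a)/Y\<^sup>2 = u - (F - a/Y)\<^sup>2 - l"
  using assms by (simp add: field_simps power2_eq_square)

lemma A_sums:
  assumes k: "k \<in> {1..n}" and Y0: "Y k x t \<noteq> 0"
  shows "uxF n (a(k := - a k)) Y (FA k a Y F) x t = uxF n a Y F x t"
    "uxxF n lam (a(k := - a k)) Y (FA k a Y F) x t = uxxF n lam a Y F x t"
proof -
  have "(\<Sum>i\<in>{1..n}. 2 * Y i x t * FA k a Y F i x t - (a(k := - a k)) i) = (\<Sum>i\<in>{1..n}. 2 * Y i x t * F i x t - a i)"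
    by (rule sum.cong) (use Y0 in \<open>auto simp: FA_def field_simps\<close>)
  then show "uxF n (a(k := - a k)) Y (FA k a Y F) x t = uxF n a Y F x t" by (simp add: uxF_def)
  have "(\<Sum>i\<in>{1..n}. 2 * ((2 * Y i x t * FA k a Y F i x t - (a(k := - a k)) i) * FA k a Y F i x t + Y i x t * (uu n Y x t - (FA k a Y F i x t)\<^sup>2 - lam i)))
     = (\<Sum>i\<in>{1..n}. 2 * ((2 * Y i x t * F i x t - a i) * F i x t + Y i x t * (uu n Y x t - (F i x t)\<^sup>2 - lam i)))"
    by (rule sum.cong) (use Y0 algA2[OF Y0] in \<open>auto simp: FA_def\<close>)
  then show "uxxF n lam (a(k := - a k)) Y (FA k a Y F) x t = uxxF n lam a Y F x t" by (simp add: uxxF_def)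
qed

lemma A_sol:
  assumes U: "open U" "\<forall>(x,t)\<in>U. t \<noteq> 0" and S: "sol2 n lam a U Y F" and k: "k \<in> {1..n}"
    and Y0: "\<forall>(x,t)\<in>U. Y k x t \<noteq> 0"
  shows "sol2 n lam (a(k := - a k)) U Y (FA k a Y F)"
proof -
  have X: "xsol n lam a U Y F" using S by (simp add: sol2_def)
  have X': "xsol n lam (a(k := - a k)) U Y (FA k a Y F)"
    unfolding xsol_def
  proof (intro ballI, clarify)
    fix j x t assume j: "j \<in> {1..n}" and xt: "(x,t) \<in> U"
    have y0: "Y k x t \<noteq> 0" using Y0 xt by auto
    note d = xsolD[OF X j xt] and dk = xsolD[OF X k xt]
    show "((\<lambda>s. Y j s t) has_field_derivative 2 * Y j x t * FA k a Y F j x t - (a(k := - a k)) j) (at x) \<and>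
          ((\<lambda>s. FA k a Y F j s t) has_field_derivative uu n Y x t - (FA k a Y F j x t)\<^sup>2 - lam j) (at x)"
    proof (cases "j = k")
      case True
      have 1: "((\<lambda>s. Y j s t) has_field_derivative 2 * Y j x t * FA k a Y F j x t - (a(k := - a k)) j) (at x)"
      proof -
        have e: "2 * Y j x t * FA k a Y F j x t - (a(k := - a k)) j = 2 * Y j x t * F j x t - a j"
          using True y0 by (simp add: FA_def field_simps)
        show ?thesis unfolding e by (rule d(1))
      qed
      have "((\<lambda>s. F k s t - a k / Y k s t) has_field_derivative uu n Y x t - (F k x t - a k / Y k x t)\<^sup>2 - lam k) (at x)"
      proof -
        have "((\<lambda>s. F k s t - a k / Y k s t) has_field_derivative (uu n Y x t - (F k x t)\<^sup>2 - lam k) + a k * (2 * Y k x t * F k x t - a k) / (Y k x t)\<^sup>2) (at x)"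
          by (rule derivative_eq_intros dk refl y0)+ (use y0 in \<open>simp add: power2_eq_square\<close>)
        then show ?thesis by (simp only: algA3[OF y0])
      qed
      then show ?thesis using 1 True by simp
    next
      case False
      then show ?thesis using d by simp
    qed
  qed
  show ?thesis
    unfolding sol2_def
  proof (intro conjI X' ballI, clarify)
    fix j x t assume j: "j \<in> {1..n}" and xt: "(x,t) \<in> U"
    have y0: "Y k x t \<noteq> 0" using Y0 xt by auto
    have dt: "((\<lambda>s. Y i x s) has_field_derivative ytF n lam a Y F i x t) (at t)"
      "((\<lambda>s. F i x s) has_field_derivative ftF n lam a Y F i x t) (at t)" if "i \<in> {1..n}" for i
      using S that xt unfolding sol2_def by fastforce+
    note sums = A_sums(1)[where Y=Y and x=x and t=t and a=a and F=F and k=k and n=n, OF k y0] A_sums(2)[where Y=Y and x=x and t=t and a=a and F=F and lam=lam and k=k and n=n, OF k y0]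
    show "((\<lambda>s. Y j x s) has_field_derivative ytF n lam (a(k := - a k)) Y (FA k a Y F) j x t) (at t) \<and>
          ((\<lambda>s. FA k a Y F j x s) has_field_derivative ftF n lam (a(k := - a k)) Y (FA k a Y F) j x t) (at t)"
    proof (cases "j = k")
      case True
      have 1: "ytF n lam (a(k := - a k)) Y (FA k a Y F) j x t = ytF n lam a Y F j x t"
        using True y0 by (simp add: ytF_def sums field_simps)
      have dd: "((\<lambda>s. F k x s - a k / Y k x s) has_field_derivative
          ftF n lam a Y F k x t + a k * ytF n lam a Y F k x t / (Y k x t)\<^sup>2) (at t)"
        by (rule derivative_eq_intros dt[OF k] refl y0)+ (use y0 in \<open>simp add: power2_eq_square\<close>)
      have "ftF n lam (a(k := - a k)) Y (FA k a Y F) k x t = ftF n lam a Y F k x t + a k * ytF n lam a Y F k x t / (Y k x t)\<^sup>2"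
        unfolding ftF_def ytF_def sums FA_k fun_upd_same by (rule algA[OF y0])
      with dd have "((\<lambda>s. F k x s - a k / Y k x s) has_field_derivative ftF n lam (a(k := - a k)) Y (FA k a Y F) k x t) (at t)"
        by simp
      then show ?thesis using 1 True dt[OF j] by simp
    next
      case False
      have 1: "ytF n lam (a(k := - a k)) Y (FA k a Y F) j x t = ytF n lam a Y F j x t"
        using False by (simp add: ytF_def sums)
      have 2: "ftF n lam (a(k := - a k)) Y (FA k a Y F) j x t = ftF n lam a Y F j x t"
        using False by (simp add: ftF_def sums)
      show ?thesis using False dt[OF j] 1 2 by simp
    qed
  qed
qed



definition yoB :: "(nat\<Rightarrow>complex) \<Rightarrow> (nat\<Rightarrow>complex) \<Rightarrow> (nat \<Rightarrow> complex \<Rightarrow> complex \<Rightarrow> complex) \<Rightarrow> (nat \<Rightarrow> complex \<Rightarrow> complex \<Rightarrow> complex) \<Rightarrow> nat \<Rightarrow> nat \<Rightarrow> complex \<Rightarrow> complex \<Rightarrow> complex" where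
  "yoB lam a Y F k i x t = (F i x t - F k x t)/(lam i - lam k) * ((F i x t - F k x t) * Y i x t - a i)"

definition FBf :: "(nat\<Rightarrow>complex) \<Rightarrow> (nat \<Rightarrow> complex \<Rightarrow> complex \<Rightarrow> complex) \<Rightarrow> nat \<Rightarrow> nat \<Rightarrow> complex \<Rightarrow> complex \<Rightarrow> complex" where
  "FBf lam F k i x t = -F k x t - (lam i - lam k)/(F i x t - F k x t)"

lemma yo_x:
  assumes X: "xsol n lam a U Y F" and xt: "(x,t)\<in>U" and i: "i\<in>{1..n}" and k: "k\<in>{1..n}"
    and D: "F i x t - F k x t \<noteq> 0" and L: "lam i - lam k \<noteq> 0"
  shows "((\<lambda>s. yoB lam a Y F k i s t) has_field_derivative 2*yoB lam a Y F k i x t*FBf lam F k i x t - a i) (at x)"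
proof -
  note di = xsolD[OF X i xt] and dk = xsolD[OF X k xt]
  have iD: "inverse (F i x t - F k x t) * (F i x t - F k x t) = 1" using D by simp
  have iL: "inverse (lam i - lam k) * (lam i - lam k) = 1" using L by simp
  have "((\<lambda>s. yoB lam a Y F k i s t) has_field_derivative
     ((uu n Y x t - (F i x t)\<^sup>2 - lam i) - (uu n Y x t - (F k x t)\<^sup>2 - lam k))/(lam i - lam k) * ((F i x t - F k x t)*Y i x t - a i) + (F i x t - F k x t)/(lam i - lam k) * (((uu n Y x t - (F i x t)\<^sup>2 - lam i) - (uu n Y x t - (F k x t)\<^sup>2 - lam k))*Y i x t + (F i x t - F k x t)*(2*Y i x t*F i x t - a i))) (at x)"
    unfolding yoB_def
    apply (rule derivative_eq_intros di dk refl L)+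
    by (simp add: divide_inverse power2_eq_square inverse_mult_distrib) (use iL in algebra)
  then show ?thesis unfolding yoB_def FBf_def algTx1[OF D L] .
qed

lemma FB_x:
  assumes X: "xsol n lam a U Y F" and xt: "(x,t)\<in>U" and i: "i\<in>{1..n}" and k: "k\<in>{1..n}"
    and D: "F i x t - F k x t \<noteq> 0" and L: "lam i - lam k \<noteq> 0"
  shows "((\<lambda>s. FBf lam F k i s t) has_field_derivative (-uu n Y x t + 2*(F k x t)\<^sup>2 + 2*lam k) - (FBf lam F k i x t)\<^sup>2 - lam i) (at x)"
proof -
  note di = xsolD[OF X i xt] and dk = xsolD[OF X k xt]
  have iD: "inverse (F i x t - F k x t) * (F i x t - F k x t) = 1" using D by simp
  have iL: "inverse (lam i - lam k) * (lam i - lam k) = 1" using L by simp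
  have "((\<lambda>s. FBf lam F k i s t) has_field_derivative
     -(uu n Y x t - (F k x t)\<^sup>2 - lam k) + (lam i - lam k)*((uu n Y x t - (F i x t)\<^sup>2 - lam i) - (uu n Y x t - (F k x t)\<^sup>2 - lam k))/(F i x t - F k x t)\<^sup>2) (at x)"
    unfolding FBf_def
    apply (rule derivative_eq_intros di dk refl D)+
    using D by (simp add: divide_inverse power2_eq_square inverse_mult_distrib)
  then show ?thesis unfolding FBf_def algTx2[OF D L] .
qed

lemma sol2_t:
  assumes "sol2 n lam a U Y F" "i \<in> {1..n}" "(x,t) \<in> U"
  shows "((\<lambda>s. Y i x s) has_field_derivative ytF n lam a Y F i x t) (at t)"
    "((\<lambda>s. F i x s) has_field_derivative ftF n lam a Y F i x t) (at t)"
  using assms unfolding sol2_def by fastforce+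

lemma yo_t:
  assumes S: "sol2 n lam a U Y F" and xt: "(x,t)\<in>U" and i: "i\<in>{1..n}" and k: "k\<in>{1..n}"
    and D: "F i x t - F k x t \<noteq> 0" and L: "lam i - lam k \<noteq> 0"
  shows "((\<lambda>s. yoB lam a Y F k i x s) has_field_derivative
     2*(-uxF n a Y F x t + 4*F k x t*(uu n Y x t - (F k x t)\<^sup>2 - lam k))*yoB lam a Y F k i x t
     - 2*((-uu n Y x t + 2*(F k x t)\<^sup>2 + 2*lam k) + 2*lam i)*(2*yoB lam a Y F k i x t*FBf lam F k i x t - a i)) (at t)"
proof -
  note di = sol2_t[OF S i xt] and dk = sol2_t[OF S k xt]
  have iL: "inverse (lam i - lam k) * (lam i - lam k) = 1" using L by simp
  have "((\<lambda>s. yoB lam a Y F k i x s) has_field_derivative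
     (ftF n lam a Y F i x t - ftF n lam a Y F k x t)/(lam i - lam k) * ((F i x t - F k x t)*Y i x t - a i)
     + (F i x t - F k x t)/(lam i - lam k) * ((ftF n lam a Y F i x t - ftF n lam a Y F k x t)*Y i x t + (F i x t - F k x t)*ytF n lam a Y F i x t)) (at t)"
    unfolding yoB_def
    apply (rule derivative_eq_intros di dk refl L)+
    by (simp add: divide_inverse power2_eq_square inverse_mult_distrib) (use iL in algebra)
  moreover have "(ftF n lam a Y F i x t - ftF n lam a Y F k x t)/(lam i - lam k) * ((F i x t - F k x t)*Y i x t - a i)
     + (F i x t - F k x t)/(lam i - lam k) * ((ftF n lam a Y F i x t - ftF n lam a Y F k x t)*Y i x t + (F i x t - F k x t)*ytF n lam a Y F i x t)
     = 2*(-uxF n a Y F x t + 4*F k x t*(uu n Y x t - (F k x t)\<^sup>2 - lam k))*yoB lam a Y F k i x t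
     - 2*((-uu n Y x t + 2*(F k x t)\<^sup>2 + 2*lam k) + 2*lam i)*(2*yoB lam a Y F k i x t*FBf lam F k i x t - a i)"
    unfolding ftF_def ytF_def yoB_def FBf_def by (rule algTt1[OF D L, unfolded Let_def])
  ultimately show ?thesis by simp
qed

lemma FB_t:
  assumes S: "sol2 n lam a U Y F" and xt: "(x,t)\<in>U" and i: "i\<in>{1..n}" and k: "k\<in>{1..n}"
    and D: "F i x t - F k x t \<noteq> 0" and L: "lam i - lam k \<noteq> 0"
  shows "((\<lambda>s. FBf lam F k i x s) has_field_derivative
     (-uxxF n lam a Y F x t + 4*((uu n Y x t - (F k x t)\<^sup>2 - lam k)\<^sup>2 + F k x t*(uxF n a Y F x t - 2*F k x t*(uu n Y x t - (F k x t)\<^sup>2 - lam k))))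
     - 2*((-uxF n a Y F x t + 4*F k x t*(uu n Y x t - (F k x t)\<^sup>2 - lam k))*FBf lam F k i x t
        + ((-uu n Y x t + 2*(F k x t)\<^sup>2 + 2*lam k) + 2*lam i)*((-uu n Y x t + 2*(F k x t)\<^sup>2 + 2*lam k) - (FBf lam F k i x t)\<^sup>2 - lam i))) (at t)"
proof -
  note di = sol2_t[OF S i xt] and dk = sol2_t[OF S k xt]
  have "((\<lambda>s. FBf lam F k i x s) has_field_derivative
     -ftF n lam a Y F k x t + (lam i - lam k)*(ftF n lam a Y F i x t - ftF n lam a Y F k x t)/(F i x t - F k x t)\<^sup>2) (at t)"
    unfolding FBf_def
    apply (rule derivative_eq_intros di dk refl D)+
    using D by (simp add: divide_inverse power2_eq_square inverse_mult_distrib)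
  moreover have "-ftF n lam a Y F k x t + (lam i - lam k)*(ftF n lam a Y F i x t - ftF n lam a Y F k x t)/(F i x t - F k x t)\<^sup>2
     = (-uxxF n lam a Y F x t + 4*((uu n Y x t - (F k x t)\<^sup>2 - lam k)\<^sup>2 + F k x t*(uxF n a Y F x t - 2*F k x t*(uu n Y x t - (F k x t)\<^sup>2 - lam k))))
     - 2*((-uxF n a Y F x t + 4*F k x t*(uu n Y x t - (F k x t)\<^sup>2 - lam k))*FBf lam F k i x t
        + ((-uu n Y x t + 2*(F k x t)\<^sup>2 + 2*lam k) + 2*lam i)*((-uu n Y x t + 2*(F k x t)\<^sup>2 + 2*lam k) - (FBf lam F k i x t)\<^sup>2 - lam i))"
    unfolding ftF_def FBf_def by (rule algTt2[OF D L, unfolded Let_def])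
  ultimately show ?thesis by simp
qed



lemma sum_split1: "(k::nat) \<in> {1..n} \<Longrightarrow> (\<Sum>i\<in>{1..n}. g i) = g k + (\<Sum>i\<in>{1..n}-{k}. g i)"
  by (rule sum.remove) simp_all

lemma uu_split: "k \<in> {1..n} \<Longrightarrow> uu n Y x t = x/(6*t) + (1/(3*t))*(Y k x t + (\<Sum>i\<in>{1..n}-{k}. Y i x t))"
  unfolding uu_def by (subst sum_split1[of k n]) simp_all

lemma ux_split: "k \<in> {1..n} \<Longrightarrow> uxF n a Y F x t = 1/(6*t) + (1/(3*t))*((2*Y k x t*F k x t - a k)
    + (2*(\<Sum>i\<in>{1..n}-{k}. F i x t * Y i x t) - (\<Sum>i\<in>{1..n}-{k}. a i)))"
  unfolding uxF_def
  by (subst sum_split1[of k n], assumption, subst conv4[where y="\<lambda>i. Y i x t" and f="\<lambda>i. F i x t" and S="{1..n}-{k}"]) simp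

lemma uxx_split: "k \<in> {1..n} \<Longrightarrow> uxxF n lam a Y F x t = (1/(3*t))*(2*((2*Y k x t*F k x t - a k)*F k x t + Y k x t*(uu n Y x t - (F k x t)\<^sup>2 - lam k))
    + 2*((\<Sum>i\<in>{1..n}-{k}. (F i x t)\<^sup>2 * Y i x t) - (\<Sum>i\<in>{1..n}-{k}. F i x t * a i) + uu n Y x t*(\<Sum>i\<in>{1..n}-{k}. Y i x t) - (\<Sum>i\<in>{1..n}-{k}. lam i * Y i x t)))"
  unfolding uxxF_def
  by (subst sum_split1[of k n], assumption, subst conv3[where y="\<lambda>i. Y i x t" and f="\<lambda>i. F i x t" and S="{1..n}-{k}"]) simp

definition YB :: "nat \<Rightarrow> (nat\<Rightarrow>complex) \<Rightarrow> (nat\<Rightarrow>complex) \<Rightarrow> (nat \<Rightarrow> complex \<Rightarrow> complex \<Rightarrow> complex) \<Rightarrow> (nat \<Rightarrow> complex \<Rightarrow> complex \<Rightarrow> complex) \<Rightarrow> nat \<Rightarrow> nat \<Rightarrow> complex \<Rightarrow> complex \<Rightarrow> complex" where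
  "YB n lam a Y F k = (\<lambda>j x t. if j = k then -Y k x t + 6*t*((F k x t)\<^sup>2 + lam k) - x - (\<Sum>i\<in>{1..n}-{k}. yoB lam a Y F k i x t + Y i x t) else yoB lam a Y F k j x t)"

definition FB :: "(nat\<Rightarrow>complex) \<Rightarrow> (nat \<Rightarrow> complex \<Rightarrow> complex \<Rightarrow> complex) \<Rightarrow> nat \<Rightarrow> nat \<Rightarrow> complex \<Rightarrow> complex \<Rightarrow> complex" where
  "FB lam F k = (\<lambda>j x t. if j = k then -F k x t else FBf lam F k j x t)"

lemma YB_k: "YB n lam a Y F k k x t = -Y k x t + 6*t*((F k x t)\<^sup>2 + lam k) - x - (\<Sum>i\<in>{1..n}-{k}. yoB lam a Y F k i x t + Y i x t)"
  by (simp add: YB_def)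
lemma YB_nk: "j \<noteq> k \<Longrightarrow> YB n lam a Y F k j x t = yoB lam a Y F k j x t"
  by (simp add: YB_def)
lemma FB_k: "FB lam F k k x t = -F k x t" by (simp add: FB_def)
lemma FB_nk: "j \<noteq> k \<Longrightarrow> FB lam F k j x t = FBf lam F k j x t" by (simp add: FB_def)

lemma B_P1:
  assumes k: "k \<in> {1..n}" and t: "t \<noteq> 0"
  shows "uu n (YB n lam a Y F k) x t = -uu n Y x t + 2*(F k x t)\<^sup>2 + 2*lam k"
proof -
  have s1: "(\<Sum>i\<in>{1..n}-{k}. YB n lam a Y F k i x t) = (\<Sum>i\<in>{1..n}-{k}. yoB lam a Y F k i x t)"
    by (rule sum.cong) (auto simp: YB_nk)
  have s2: "(\<Sum>i\<in>{1..n}-{k}. yoB lam a Y F k i x t + Y i x t) = (\<Sum>i\<in>{1..n}-{k}. yoB lam a Y F k i x t) + (\<Sum>i\<in>{1..n}-{k}. Y i x t)"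
    by (rule sum.distrib)
  have "uu n (YB n lam a Y F k) x t = x/(6*t) + (1/(3*t))*((-Y k x t + 6*t*((F k x t)\<^sup>2 + lam k) - x - ((\<Sum>i\<in>{1..n}-{k}. yoB lam a Y F k i x t) + (\<Sum>i\<in>{1..n}-{k}. Y i x t))) + (\<Sum>i\<in>{1..n}-{k}. yoB lam a Y F k i x t))"
    unfolding uu_split[OF k, of "YB n lam a Y F k"] s1 YB_k s2 ..
  also have "\<dots> = -uu n Y x t + 2*(F k x t)\<^sup>2 + 2*lam k"
    by (rule algP1[OF t uu_split[OF k]])
  finally show ?thesis .
qed

lemma YBk_x:
  assumes X: "xsol n lam a U Y F" and xt: "(x,t)\<in>U" and k: "k\<in>{1..n}" and t: "t \<noteq> 0"
    and DL: "\<forall>i\<in>{1..n}-{k}. F i x t - F k x t \<noteq> 0 \<and> lam i - lam k \<noteq> 0"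
  shows "((\<lambda>s. YB n lam a Y F k k s t) has_field_derivative 2*YB n lam a Y F k k x t*(-F k x t) - (1 - a k)) (at x)"
proof -
  let ?S = "{1..n}-{k}"
  have sd: "((\<lambda>s. \<Sum>i\<in>?S. yoB lam a Y F k i s t + Y i s t) has_field_derivative
      (\<Sum>i\<in>?S. (2*yoB lam a Y F k i x t*FBf lam F k i x t - a i) + (2 * Y i x t * F i x t - a i))) (at x)"
  proof (rule DERIV_sum)
    fix i assume i: "i \<in> ?S"
    then have i': "i \<in> {1..n}" by auto
    show "((\<lambda>s. yoB lam a Y F k i s t + Y i s t) has_field_derivative
      (2*yoB lam a Y F k i x t*FBf lam F k i x t - a i) + (2 * Y i x t * F i x t - a i)) (at x)"
      using DL i by (intro DERIV_add yo_x[OF X xt i' k] xsolD(1)[OF X i' xt]) auto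
  qed
  have e: "(\<Sum>i\<in>?S. (2*yoB lam a Y F k i x t*FBf lam F k i x t - a i) + (2 * Y i x t * F i x t - a i))
     = -2*F k x t*(\<Sum>i\<in>?S. yoB lam a Y F k i x t) + 2*F k x t*(\<Sum>i\<in>?S. Y i x t)"
  proof -
    have "(\<Sum>i\<in>?S. (2*yoB lam a Y F k i x t*FBf lam F k i x t - a i) + (2 * Y i x t * F i x t - a i))
      = (\<Sum>i\<in>?S. -2*F k x t*yoB lam a Y F k i x t + 2*F k x t*Y i x t)"
    proof (rule sum.cong[OF refl])
      fix i assume "i \<in> ?S"
      then have D: "F i x t - F k x t \<noteq> 0" and L: "lam i - lam k \<noteq> 0" using DL by auto
      show "(2*yoB lam a Y F k i x t*FBf lam F k i x t - a i) + (2 * Y i x t * F i x t - a i) = -2*F k x t*yoB lam a Y F k i x t + 2*F k x t*Y i x t"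
        unfolding yoB_def FBf_def by (rule algSx[OF D L])
    qed
    also have "\<dots> = -2*F k x t*(\<Sum>i\<in>?S. yoB lam a Y F k i x t) + 2*F k x t*(\<Sum>i\<in>?S. Y i x t)"
      by (simp only: sum.distrib sum_distrib_left)
    finally show ?thesis .
  qed
  note dk = xsolD[OF X k xt]
  have "((\<lambda>s. -Y k s t + 6*t*((F k s t)\<^sup>2 + lam k) - s - (\<Sum>i\<in>?S. yoB lam a Y F k i s t + Y i s t)) has_field_derivative
     -(2*Y k x t*F k x t - a k) + 6*t*(2*F k x t*(uu n Y x t - (F k x t)\<^sup>2 - lam k)) - 1 - (-2*F k x t*(\<Sum>i\<in>?S. yoB lam a Y F k i x t) + 2*F k x t*(\<Sum>i\<in>?S. Y i x t))) (at x)"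
    unfolding e[symmetric]
    by (rule sd derivative_eq_intros dk refl)+ (simp add: algebra_simps)
  also have "-(2*Y k x t*F k x t - a k) + 6*t*(2*F k x t*(uu n Y x t - (F k x t)\<^sup>2 - lam k)) - 1 - (-2*F k x t*(\<Sum>i\<in>?S. yoB lam a Y F k i x t) + 2*F k x t*(\<Sum>i\<in>?S. Y i x t))
     = 2*(-Y k x t + 6*t*((F k x t)\<^sup>2 + lam k) - x - ((\<Sum>i\<in>?S. yoB lam a Y F k i x t) + (\<Sum>i\<in>?S. Y i x t)))*(-F k x t) - (1 - a k)"
    by (rule algKx1[OF t uu_split[OF k]])
  also have "\<dots> = 2*YB n lam a Y F k k x t*(-F k x t) - (1 - a k)"
    unfolding YB_k sum.distrib ..
  finally show ?thesis unfolding YB_k .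
qed


lemma YBk_t:
  assumes S: "sol2 n lam a U Y F" and xt: "(x,t)\<in>U" and k: "k\<in>{1..n}" and t: "t \<noteq> 0"
    and DL: "\<forall>i\<in>{1..n}-{k}. F i x t - F k x t \<noteq> 0 \<and> lam i - lam k \<noteq> 0"
  shows "((\<lambda>s. YB n lam a Y F k k x s) has_field_derivative
    2*(-uxF n a Y F x t + 4*F k x t*(uu n Y x t - (F k x t)\<^sup>2 - lam k))*YB n lam a Y F k k x t
    - 2*((-uu n Y x t + 2*(F k x t)\<^sup>2 + 2*lam k) + 2*lam k)*(2*YB n lam a Y F k k x t*(-F k x t) - (1 - a k))) (at t)"
proof -
  let ?S = "{1..n}-{k}"
  let ?uxN = "-uxF n a Y F x t + 4*F k x t*(uu n Y x t - (F k x t)\<^sup>2 - lam k)"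
  let ?uN = "-uu n Y x t + 2*(F k x t)\<^sup>2 + 2*lam k"
  let ?yot = "\<lambda>i. 2*?uxN*yoB lam a Y F k i x t - 2*(?uN + 2*lam i)*(2*yoB lam a Y F k i x t*FBf lam F k i x t - a i)"
  let ?G = "\<lambda>i. 2*(4*F k x t*(F i x t - F k x t)*((F i x t - F k x t)*Y i x t - a i) + ((?uN + 2*lam k) + 2*(lam i - lam k))*(2*(F i x t - F k x t)*Y i x t - a i))"
  have sd: "((\<lambda>s. \<Sum>i\<in>?S. yoB lam a Y F k i x s + Y i x s) has_field_derivative
      (\<Sum>i\<in>?S. ?yot i + ytF n lam a Y F i x t)) (at t)"
  proof (rule DERIV_sum)
    fix i assume i: "i \<in> ?S"
    then have i': "i \<in> {1..n}" by auto
    show "((\<lambda>s. yoB lam a Y F k i x s + Y i x s) has_field_derivative ?yot i + ytF n lam a Y F i x t) (at t)"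
      using DL i by (intro DERIV_add yo_t[OF S xt i' k] sol2_t(1)[OF S i' xt]) auto
  qed
  have e1: "(\<Sum>i\<in>?S. ?yot i + ytF n lam a Y F i x t)
     = (2*?uxN + 4*(?uN + 2*lam k)*F k x t)*(\<Sum>i\<in>?S. yoB lam a Y F k i x t) + (\<Sum>i\<in>?S. ?G i) + (\<Sum>i\<in>?S. ytF n lam a Y F i x t)"
  proof -
    have "(\<Sum>i\<in>?S. ?yot i + ytF n lam a Y F i x t)
      = (\<Sum>i\<in>?S. (2*?uxN + 4*(?uN + 2*lam k)*F k x t)*yoB lam a Y F k i x t + ?G i + ytF n lam a Y F i x t)"
    proof (rule sum.cong[OF refl])
      fix i assume "i \<in> ?S"
      then have D: "F i x t - F k x t \<noteq> 0" and L: "lam i - lam k \<noteq> 0" using DL by auto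
      have "?yot i = 2*?uxN*yoB lam a Y F k i x t + 4*(?uN + 2*lam k)*F k x t*yoB lam a Y F k i x t + ?G i"
        unfolding yoB_def FBf_def by (rule algSt[OF D L, unfolded Let_def])
      then show "?yot i + ytF n lam a Y F i x t = (2*?uxN + 4*(?uN + 2*lam k)*F k x t)*yoB lam a Y F k i x t + ?G i + ytF n lam a Y F i x t"
        by (simp add: algebra_simps)
    qed
    also have "\<dots> = (2*?uxN + 4*(?uN + 2*lam k)*F k x t)*(\<Sum>i\<in>?S. yoB lam a Y F k i x t) + (\<Sum>i\<in>?S. ?G i) + (\<Sum>i\<in>?S. ytF n lam a Y F i x t)"
      by (simp only: sum.distrib sum_distrib_left)
    finally show ?thesis .
  qed
  have c1: "(\<Sum>i\<in>?S. ?G i) = 2*(4*F k x t*((\<Sum>i\<in>?S. (F i x t)^2 * Y i x t) - 2*F k x t*(\<Sum>i\<in>?S. F i x t * Y i x t) + (F k x t)^2*(\<Sum>i\<in>?S. Y i x t) - (\<Sum>i\<in>?S. F i x t * a i) + F k x t*(\<Sum>i\<in>?S. a i))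
      + (?uN + 2*lam k)*(2*(\<Sum>i\<in>?S. F i x t * Y i x t) - 2*F k x t*(\<Sum>i\<in>?S. Y i x t) - (\<Sum>i\<in>?S. a i))
      + 2*(2*(\<Sum>i\<in>?S. lam i * F i x t * Y i x t) - 2*F k x t*(\<Sum>i\<in>?S. lam i * Y i x t) - (\<Sum>i\<in>?S. lam i * a i) - lam k*(2*(\<Sum>i\<in>?S. F i x t * Y i x t) - 2*F k x t*(\<Sum>i\<in>?S. Y i x t) - (\<Sum>i\<in>?S. a i))))"
    by (rule conv1)
  have c2: "(\<Sum>i\<in>?S. ytF n lam a Y F i x t) = 2*uxF n a Y F x t*(\<Sum>i\<in>?S. Y i x t) - 2*uu n Y x t*(2*(\<Sum>i\<in>?S. F i x t * Y i x t) - (\<Sum>i\<in>?S. a i)) - 4*(2*(\<Sum>i\<in>?S. lam i * F i x t * Y i x t) - (\<Sum>i\<in>?S. lam i * a i))"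
    unfolding ytF_def by (rule conv2)
  note dk = sol2_t[OF S k xt]
  have "((\<lambda>s. YB n lam a Y F k k x s) has_field_derivative
     -ytF n lam a Y F k x t + 6*((F k x t)\<^sup>2 + lam k) + 6*t*(2*F k x t*ftF n lam a Y F k x t) - (\<Sum>i\<in>?S. ?yot i + ytF n lam a Y F i x t)) (at t)"
    unfolding YB_k
    by (rule sd derivative_eq_intros dk refl)+ (simp add: algebra_simps)
  also have "-ytF n lam a Y F k x t + 6*((F k x t)\<^sup>2 + lam k) + 6*t*(2*F k x t*ftF n lam a Y F k x t) - (\<Sum>i\<in>?S. ?yot i + ytF n lam a Y F i x t)
    = 2*?uxN*(-Y k x t + 6*t*((F k x t)\<^sup>2+lam k) - x - ((\<Sum>i\<in>?S. yoB lam a Y F k i x t) + (\<Sum>i\<in>?S. Y i x t)))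
      - 2*(?uN + 2*lam k)*(2*(-Y k x t + 6*t*((F k x t)\<^sup>2+lam k) - x - ((\<Sum>i\<in>?S. yoB lam a Y F k i x t) + (\<Sum>i\<in>?S. Y i x t)))*(-F k x t) - (1 - a k))"
    unfolding e1 c1 c2 unfolding ytF_def[of n lam a Y F k x t] ftF_def[of n lam a Y F k x t]
    by (rule algKt1[OF t uu_split[OF k] ux_split[OF k] uxx_split[OF k], unfolded Let_def])
  finally show ?thesis unfolding YB_k sum.distrib .
qed


lemma B_sol:
  assumes U: "open U" "\<forall>(x,t)\<in>U. t \<noteq> 0" and S: "sol2 n lam a U Y F" and k: "k \<in> {1..n}"
    and lamd: "\<forall>i\<in>{1..n}. \<forall>j\<in>{1..n}. i \<noteq> j \<longrightarrow> lam i \<noteq> lam j"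
    and Fd: "\<forall>(x,t)\<in>U. \<forall>j\<in>{1..n}-{k}. F j x t \<noteq> F k x t"
  shows "sol2 n lam (a(k := 1 - a k)) U (YB n lam a Y F k) (FB lam F k)"
proof -
  let ?Yn = "YB n lam a Y F k" and ?Fn = "FB lam F k" and ?an = "a(k := 1 - a k)"
  have X: "xsol n lam a U Y F" using S by (simp add: sol2_def)
  have t0: "t \<noteq> 0" if "(x,t) \<in> U" for x t using U(2) that by auto
  have DL: "\<forall>i\<in>{1..n}-{k}. F i x t - F k x t \<noteq> 0 \<and> lam i - lam k \<noteq> 0" if "(x,t) \<in> U" for x t
    using Fd that lamd k by fastforce
  have P1: "uu n ?Yn x t = -uu n Y x t + 2*(F k x t)\<^sup>2 + 2*lam k" if "(x,t) \<in> U" for x t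
    using B_P1[OF k t0[OF that]] .
  have X': "xsol n lam ?an U ?Yn ?Fn"
    unfolding xsol_def
  proof (intro ballI, clarify)
    fix j x t assume j: "j \<in> {1..n}" and xt: "(x,t) \<in> U"
    show "((\<lambda>s. ?Yn j s t) has_field_derivative 2 * ?Yn j x t * ?Fn j x t - ?an j) (at x) \<and>
          ((\<lambda>s. ?Fn j s t) has_field_derivative uu n ?Yn x t - (?Fn j x t)\<^sup>2 - lam j) (at x)"
    proof (cases "j = k")
      case True
      have 1: "((\<lambda>s. ?Yn k s t) has_field_derivative 2 * ?Yn k x t * ?Fn k x t - ?an k) (at x)"
        using YBk_x[OF X xt k t0[OF xt] DL[OF xt]] by (simp add: FB_k)
      have "((\<lambda>s. - F k s t) has_field_derivative - (uu n Y x t - (F k x t)\<^sup>2 - lam k)) (at x)"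
        by (intro DERIV_minus xsolD(2)[OF X k xt])
      then have 2: "((\<lambda>s. ?Fn k s t) has_field_derivative uu n ?Yn x t - (?Fn k x t)\<^sup>2 - lam k) (at x)"
        by (simp add: FB_k P1[OF xt] algebra_simps)
      show ?thesis using 1 2 True by simp
    next
      case False
      then have jS: "j \<in> {1..n}-{k}" using j by auto
      have D: "F j x t - F k x t \<noteq> 0" and L: "lam j - lam k \<noteq> 0" using DL[OF xt] jS by auto
      have 1: "((\<lambda>s. ?Yn j s t) has_field_derivative 2 * ?Yn j x t * ?Fn j x t - ?an j) (at x)"
        using yo_x[OF X xt j k D L] False by (simp add: YB_nk FB_nk)
      have 2: "((\<lambda>s. ?Fn j s t) has_field_derivative uu n ?Yn x t - (?Fn j x t)\<^sup>2 - lam j) (at x)"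
        using FB_x[OF X xt j k D L] False by (simp add: FB_nk P1[OF xt])
      show ?thesis using 1 2 by simp
    qed
  qed
  have U1: "uxF n ?an ?Yn ?Fn x t = -uxF n a Y F x t + 4*F k x t*(uu n Y x t - (F k x t)\<^sup>2 - lam k)"
    if xt: "(x,t) \<in> U" for x t
  proof -
    have d1: "((\<lambda>s. uu n ?Yn s t) has_field_derivative uxF n ?an ?Yn ?Fn x t) (at x)"
      by (rule uu_deriv[OF X' xt t0[OF xt]])
    have d2: "((\<lambda>s. -uu n Y s t + 2*(F k s t)\<^sup>2 + 2*lam k) has_field_derivative
        -uxF n a Y F x t + 4*F k x t*(uu n Y x t - (F k x t)\<^sup>2 - lam k)) (at x)"
      by (rule derivative_eq_intros uu_deriv[OF X xt t0[OF xt]] xsolD(2)[OF X k xt] refl)+ (simp add: algebra_simps)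
    have d2': "((\<lambda>s. uu n ?Yn s t) has_field_derivative
        -uxF n a Y F x t + 4*F k x t*(uu n Y x t - (F k x t)\<^sup>2 - lam k)) (at x)"
      by (rule has_field_derivative_transform_within_open[OF d2 open_slice[OF U(1)]]) (use xt P1 in auto)
    show ?thesis using DERIV_unique[OF d1 d2'] .
  qed
  have U2: "uxxF n lam ?an ?Yn ?Fn x t = -uxxF n lam a Y F x t + 4*((uu n Y x t - (F k x t)\<^sup>2 - lam k)\<^sup>2 + F k x t*(uxF n a Y F x t - 2*F k x t*(uu n Y x t - (F k x t)\<^sup>2 - lam k)))"
    if xt: "(x,t) \<in> U" for x t
  proof -
    have d1: "((\<lambda>s. uxF n ?an ?Yn ?Fn s t) has_field_derivative uxxF n lam ?an ?Yn ?Fn x t) (at x)"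
      by (rule uxF_deriv[OF X' xt])
    have d2: "((\<lambda>s. -uxF n a Y F s t + 4*F k s t*(uu n Y s t - (F k s t)\<^sup>2 - lam k)) has_field_derivative
        -uxxF n lam a Y F x t + 4*((uu n Y x t - (F k x t)\<^sup>2 - lam k)\<^sup>2 + F k x t*(uxF n a Y F x t - 2*F k x t*(uu n Y x t - (F k x t)\<^sup>2 - lam k)))) (at x)"
      by (rule derivative_eq_intros uxF_deriv[OF X xt] uu_deriv[OF X xt t0[OF xt]] xsolD(2)[OF X k xt] refl)+
         (simp add: algebra_simps power2_eq_square)
    have d2': "((\<lambda>s. uxF n ?an ?Yn ?Fn s t) has_field_derivative
        -uxxF n lam a Y F x t + 4*((uu n Y x t - (F k x t)\<^sup>2 - lam k)\<^sup>2 + F k x t*(uxF n a Y F x t - 2*F k x t*(uu n Y x t - (F k x t)\<^sup>2 - lam k)))) (at x)"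
      by (rule has_field_derivative_transform_within_open[OF d2 open_slice[OF U(1)]]) (use xt U1 in auto)
    show ?thesis using DERIV_unique[OF d1 d2'] .
  qed
  show ?thesis
    unfolding sol2_def
  proof (intro conjI X' ballI, clarify)
    fix j x t assume j: "j \<in> {1..n}" and xt: "(x,t) \<in> U"
    show "((\<lambda>s. ?Yn j x s) has_field_derivative ytF n lam ?an ?Yn ?Fn j x t) (at t) \<and>
          ((\<lambda>s. ?Fn j x s) has_field_derivative ftF n lam ?an ?Yn ?Fn j x t) (at t)"
    proof (cases "j = k")
      case True
      have 1: "((\<lambda>s. ?Yn k x s) has_field_derivative ytF n lam ?an ?Yn ?Fn k x t) (at t)"
        using YBk_t[OF S xt k t0[OF xt] DL[OF xt]]
        unfolding ytF_def U1[OF xt] P1[OF xt] FB_k by simp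
      have "((\<lambda>s. - F k x s) has_field_derivative - ftF n lam a Y F k x t) (at t)"
        by (intro DERIV_minus sol2_t(2)[OF S k xt])
      moreover have "- ftF n lam a Y F k x t = ftF n lam ?an ?Yn ?Fn k x t"
        unfolding ftF_def[of n lam ?an] U2[OF xt] U1[OF xt] P1[OF xt] FB_k ftF_def
        by (rule algKt2)
      ultimately have 2: "((\<lambda>s. ?Fn k x s) has_field_derivative ftF n lam ?an ?Yn ?Fn k x t) (at t)"
        by (simp add: FB_k)
      show ?thesis using 1 2 True by simp
    next
      case False
      then have jS: "j \<in> {1..n}-{k}" using j by auto
      have D: "F j x t - F k x t \<noteq> 0" and L: "lam j - lam k \<noteq> 0" using DL[OF xt] jS by auto
      have 1: "((\<lambda>s. ?Yn j x s) has_field_derivative ytF n lam ?an ?Yn ?Fn j x t) (at t)"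
        using yo_t[OF S xt j k D L] False unfolding ytF_def U1[OF xt] P1[OF xt] by (simp add: YB_nk FB_nk)
      have 2: "((\<lambda>s. ?Fn j x s) has_field_derivative ftF n lam ?an ?Yn ?Fn j x t) (at t)"
        using FB_t[OF S xt j k D L] False unfolding ftF_def[of n lam ?an] U2[OF xt] U1[OF xt] P1[OF xt] by (simp add: FB_nk)
      show ?thesis using 1 2 by simp
    qed
  qed
qed



definition Byo :: "(nat\<Rightarrow>complex) \<Rightarrow> nat \<Rightarrow> (nat\<Rightarrow>complex) \<Rightarrow> (nat\<Rightarrow>complex) \<Rightarrow> (nat\<Rightarrow>complex) \<Rightarrow> nat \<Rightarrow> complex" where
  "Byo lam k y f a i = (f i - f k)/(lam i - lam k) * ((f i - f k) * y i - a i)"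
definition Bfv :: "(nat\<Rightarrow>complex) \<Rightarrow> nat \<Rightarrow> (nat\<Rightarrow>complex) \<Rightarrow> nat \<Rightarrow> complex" where
  "Bfv lam k f i = (if i = k then - f k else - f k - (lam i - lam k)/(f i - f k))"
definition Byv :: "nat \<Rightarrow> (nat\<Rightarrow>complex) \<Rightarrow> nat \<Rightarrow> complex \<Rightarrow> complex \<Rightarrow> (nat\<Rightarrow>complex) \<Rightarrow> (nat\<Rightarrow>complex) \<Rightarrow> (nat\<Rightarrow>complex) \<Rightarrow> nat \<Rightarrow> complex" where
  "Byv n lam k x t y f a i = (if i = k then - y k + 6*t*((f k)\<^sup>2 + lam k) - x - (\<Sum>j\<in>{1..n}-{k}. Byo lam k y f a j + y j) else Byo lam k y f a i)"

lemma B_map_eq: "B_map n lam k x t (y,f,a) = (Byv n lam k x t y f a, Bfv lam k f, a(k := 1 - a k))"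
  unfolding B_map_def Let_def by (simp add: fun_eq_iff Byv_def Byo_def Bfv_def)

lemma B_ok_eq: "B_ok n k (y,f,a) = (\<forall>i\<in>{1..n}-{k}. f i \<noteq> f k)"
  by (simp add: B_ok_def)

lemma sub0: "(u::complex) \<noteq> v \<Longrightarrow> u - v \<noteq> 0" by simp

lemma B_invol:
  assumes k: "k \<in> {1..n}" and lamd: "\<forall>i\<in>{1..n}. \<forall>j\<in>{1..n}. i \<noteq> j \<longrightarrow> lam i \<noteq> lam j"
    and ok: "\<forall>i\<in>{1..n}-{k}. f i \<noteq> f k"
  shows "eq_on n (B_map n lam k x t (B_map n lam k x t (y,f,a))) (y,f,a)"
proof -
  let ?S = "{1..n}-{k}"
  have DL: "f i - f k \<noteq> 0" "lam i - lam k \<noteq> 0" if "i \<in> ?S" for i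
    using ok lamd k that by (auto intro!: sub0)
  have fB: "Bfv lam k (Bfv lam k f) i = f i" if "i \<in> {1..n}" for i
  proof (cases "i = k")
    case False
    then have i: "i \<in> ?S" using that by auto
    note f = invI[OF DL(1)[OF i]] invI[OF DL(2)[OF i]]
    have N: "(- f k - (lam i - lam k) / (f i - f k)) - - f k \<noteq> 0" using DL[OF i] by simp
    show ?thesis unfolding Bfv_def using f invI[OF N] unfolding divide_inverse by (simp add: False) algebra
  qed (simp add: Bfv_def)
  have yB: "Byo lam k (Byv n lam k x t y f a) (Bfv lam k f) (a(k := 1 - a k)) i = y i" if i: "i \<in> ?S" for i
  proof -
    note f = invI[OF DL(1)[OF i]] invI[OF DL(2)[OF i]]
    have N: "(- f k - (lam i - lam k) / (f i - f k)) - - f k \<noteq> 0" using DL[OF i] by simp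
    have ik: "i \<noteq> k" using i by auto
    show ?thesis unfolding Byo_def Byv_def Bfv_def using f invI[OF N] unfolding divide_inverse by (simp add: ik) algebra
  qed
  have yk: "Byv n lam k x t (Byv n lam k x t y f a) (Bfv lam k f) (a(k := 1 - a k)) k = y k"
  proof -
    have "(\<Sum>j\<in>?S. Byo lam k (Byv n lam k x t y f a) (Bfv lam k f) (a(k := 1 - a k)) j + Byv n lam k x t y f a j)
       = (\<Sum>j\<in>?S. Byo lam k y f a j + y j)"
      by (rule sum.cong) (auto simp: yB Byv_def)
    then show ?thesis by (simp add: Byv_def Bfv_def)
  qed
  show ?thesis unfolding B_map_eq eq_on_def
  proof (intro ballI, simp only: fst_conv snd_conv, intro conjI)
    fix i assume i: "i \<in> {1..n}"
    show "Byv n lam k x t (Byv n lam k x t y f a) (Bfv lam k f) (a(k := 1 - a k)) i = y i"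
    proof (cases "i = k")
      case True then show ?thesis using yk by simp
    next
      case False then have "i \<in> ?S" using i by auto
      then show ?thesis using False yB by (simp add: Byv_def)
    qed
    show "Bfv lam k (Bfv lam k f) i = f i" using fB[OF i] .
    show "((a(k := 1 - a k))(k := 1 - (a(k := 1 - a k)) k)) i = a i" by simp
  qed
qed


lemma sum_split2:
  assumes "j \<noteq> k" "k \<in> {1..n::nat}"
  shows "(\<Sum>i\<in>{1..n}-{j}. g i) = g k + (\<Sum>i\<in>{1..n}-{j,k}. g i)"
proof -
  have "{1..n}-{j} = insert k ({1..n}-{j,k})" using assms by auto
  then show ?thesis by (simp add: sum.insert)
qed

locale bcomm =
  fixes n :: nat and lam :: "nat \<Rightarrow> complex" and j k :: nat and y f a :: "nat \<Rightarrow> complex" and x t :: complex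
  assumes jk: "j \<noteq> k" and j: "j \<in> {1..n}" and k: "k \<in> {1..n}"
    and lamd: "\<forall>i\<in>{1..n}. \<forall>j\<in>{1..n}. i \<noteq> j \<longrightarrow> lam i \<noteq> lam j"
    and okk: "\<forall>i\<in>{1..n}-{k}. f i \<noteq> f k"
    and okj: "\<forall>i\<in>{1..n}-{j}. f i \<noteq> f j"
    and okjk: "\<forall>i\<in>{1..n}-{j}. Bfv lam k f i \<noteq> Bfv lam k f j"
    and okkj: "\<forall>i\<in>{1..n}-{k}. Bfv lam j f i \<noteq> Bfv lam j f k"
begin

lemma other:
  assumes i: "i \<in> {1..n}-{j,k}"
  shows "Bfv lam j (Bfv lam k f) i = Bfv lam k (Bfv lam j f) i"
    "Byo lam j (Byv n lam k x t y f a) (Bfv lam k f) (a(k:=1-a k)) i = Byo lam k (Byv n lam j x t y f a) (Bfv lam j f) (a(j:=1-a j)) i"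
    "(lam j - lam k)/(f j - f k)\<^sup>2 * (Byo lam k y f a i - Byo lam j y f a i) + Byo lam j (Byv n lam k x t y f a) (Bfv lam k f) (a(k:=1-a k)) i = y i"
proof -
  have ij: "i \<noteq> j" and ik: "i \<noteq> k" and i1: "i \<in> {1..n}" using i by auto
  have A: "f i - f k \<noteq> 0" using okk i by (auto intro!: sub0)
  have B: "f j - f k \<noteq> 0" using okk j jk by (auto intro!: sub0)
  have C: "f i - f j \<noteq> 0" using okj i by (auto intro!: sub0)
  have Lij: "lam i - lam j \<noteq> 0" and Lik: "lam i - lam k \<noteq> 0" and Ljk: "lam j - lam k \<noteq> 0"
    using lamd i1 j k ij ik jk by (auto intro!: sub0)
  have h1: "Bfv lam k f i \<noteq> Bfv lam k f j" using okjk i by auto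
  have N1: "(-f k - (lam i - lam k)/(f i - f k)) - (-f k - (lam j - lam k)/(f j - f k)) \<noteq> 0"
    using sub0[OF h1] unfolding Bfv_def by (simp add: ik jk)
  have h2: "Bfv lam j f i \<noteq> Bfv lam j f k" using okkj i by auto
  have N2: "(-f j - (lam i - lam j)/(f i - f j)) - (-f j - (lam k - lam j)/(f k - f j)) \<noteq> 0"
    using sub0[OF h2] unfolding Bfv_def using jk by (simp add: ij)
  show "Bfv lam j (Bfv lam k f) i = Bfv lam k (Bfv lam j f) i"
    using algC1[OF A B C N1 N2] ij ik jk by (simp add: Bfv_def)
  show "Byo lam j (Byv n lam k x t y f a) (Bfv lam k f) (a(k:=1-a k)) i = Byo lam k (Byv n lam j x t y f a) (Bfv lam j f) (a(j:=1-a j)) i"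
    using algC2[OF A B C Lij Lik Ljk, of "y i" "a i"] ij ik jk by (simp add: Bfv_def Byo_def Byv_def)
  show "(lam j - lam k)/(f j - f k)\<^sup>2 * (Byo lam k y f a i - Byo lam j y f a i) + Byo lam j (Byv n lam k x t y f a) (Bfv lam k f) (a(k:=1-a k)) i = y i"
    using algC3[OF A B C Lij Lik Ljk, of "y i" "a i"] ij ik jk by (simp add: Bfv_def Byo_def Byv_def)
qed

lemma compf:
  "Bfv lam j (Bfv lam k f) j = Bfv lam k (Bfv lam j f) j"
proof -
  have B: "f j - f k \<noteq> 0" using okk j jk by (auto intro!: sub0)
  have Ljk: "lam j - lam k \<noteq> 0" using lamd j k jk by (auto intro!: sub0)
  show ?thesis using algC4[OF B Ljk] jk by (simp add: Bfv_def)
qed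

lemma compy:
  "Byv n lam j x t (Byv n lam k x t y f a) (Bfv lam k f) (a(k:=1-a k)) j = Byo lam k (Byv n lam j x t y f a) (Bfv lam j f) (a(j:=1-a j)) j"
proof -
  let ?S = "{1..n}-{j,k}"
  let ?z = "\<lambda>i. Byo lam j (Byv n lam k x t y f a) (Bfv lam k f) (a(k:=1-a k)) i"
  have B: "f j - f k \<noteq> 0" using okk j jk by (auto intro!: sub0)
  have Ljk: "lam j - lam k \<noteq> 0" using lamd j k jk by (auto intro!: sub0)
  have kj: "k \<noteq> j" using jk by auto
  have HZ: "(\<Sum>i\<in>?S. ?z i) = (\<Sum>i\<in>?S. y i) - (lam j - lam k)/(f j - f k)\<^sup>2 * ((\<Sum>i\<in>?S. Byo lam k y f a i) - (\<Sum>i\<in>?S. Byo lam j y f a i))"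
  proof -
    have "(\<Sum>i\<in>?S. y i) = (\<Sum>i\<in>?S. (lam j - lam k)/(f j - f k)\<^sup>2 * (Byo lam k y f a i - Byo lam j y f a i) + ?z i)"
      by (rule sum.cong[OF refl]) (use other(3) in simp)
    also have "\<dots> = (lam j - lam k)/(f j - f k)\<^sup>2 * ((\<Sum>i\<in>?S. Byo lam k y f a i) - (\<Sum>i\<in>?S. Byo lam j y f a i)) + (\<Sum>i\<in>?S. ?z i)"
      by (simp only: sum.distrib) (simp only: sum_distrib_left[symmetric] sum_subtractf)
    finally show ?thesis by simp
  qed
  have s1: "(\<Sum>i\<in>{1..n}-{j}. ?z i + Byv n lam k x t y f a i)
     = (?z k + Byv n lam k x t y f a k) + ((\<Sum>i\<in>?S. ?z i) + (\<Sum>i\<in>?S. Byo lam k y f a i))"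
  proof -
    have "(\<Sum>i\<in>{1..n}-{j}. ?z i + Byv n lam k x t y f a i) = (?z k + Byv n lam k x t y f a k) + (\<Sum>i\<in>?S. ?z i + Byv n lam k x t y f a i)"
      by (rule sum_split2[OF jk k])
    also have "(\<Sum>i\<in>?S. ?z i + Byv n lam k x t y f a i) = (\<Sum>i\<in>?S. ?z i + Byo lam k y f a i)"
      by (rule sum.cong) (auto simp: Byv_def)
    also have "\<dots> = (\<Sum>i\<in>?S. ?z i) + (\<Sum>i\<in>?S. Byo lam k y f a i)" by (rule sum.distrib)
    finally show ?thesis .
  qed
  have ee: "{1..n}-{k,j} = ?S" by auto
  have s2: "(\<Sum>i\<in>{1..n}-{k}. Byo lam k y f a i + y i) = (Byo lam k y f a j + y j) + ((\<Sum>i\<in>?S. Byo lam k y f a i) + (\<Sum>i\<in>?S. y i))"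
  proof -
    have "(\<Sum>i\<in>{1..n}-{k}. Byo lam k y f a i + y i) = (Byo lam k y f a j + y j) + (\<Sum>i\<in>{1..n}-{k,j}. Byo lam k y f a i + y i)"
      by (rule sum_split2[OF kj j])
    also have "\<dots> = (Byo lam k y f a j + y j) + ((\<Sum>i\<in>?S. Byo lam k y f a i) + (\<Sum>i\<in>?S. y i))"
      unfolding ee sum.distrib ..
    finally show ?thesis .
  qed
  have s3: "(\<Sum>i\<in>{1..n}-{j}. Byo lam j y f a i + y i) = (Byo lam j y f a k + y k) + ((\<Sum>i\<in>?S. Byo lam j y f a i) + (\<Sum>i\<in>?S. y i))"
  proof -
    have "(\<Sum>i\<in>{1..n}-{j}. Byo lam j y f a i + y i) = (Byo lam j y f a k + y k) + (\<Sum>i\<in>?S. Byo lam j y f a i + y i)"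
      by (rule sum_split2[OF jk k])
    also have "\<dots> = (Byo lam j y f a k + y k) + ((\<Sum>i\<in>?S. Byo lam j y f a i) + (\<Sum>i\<in>?S. y i))"
      unfolding sum.distrib ..
    finally show ?thesis .
  qed
  let ?P = "\<Sum>i\<in>?S. y i" and ?Pk = "\<Sum>i\<in>?S. Byo lam k y f a i" and ?Pj = "\<Sum>i\<in>?S. Byo lam j y f a i" and ?Z = "\<Sum>i\<in>?S. ?z i"
  have e1: "Byv n lam k x t y f a j = (f j - f k)/(lam j - lam k)*((f j - f k)*y j - a j)"
    using jk by (simp add: Byv_def Byo_def)
  have e2: "Bfv lam k f j = -f k - (lam j - lam k)/(f j - f k)" using jk by (simp add: Bfv_def)
  have e3: "Bfv lam k f k = -f k" by (simp add: Bfv_def)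
  have e4: "Byv n lam k x t y f a k = -y k + 6*t*((f k)\<^sup>2 + lam k) - x - (((f j - f k)/(lam j - lam k)*((f j - f k)*y j - a j) + y j) + (?Pk + ?P))"
    unfolding Byv_def[of n lam k x t y f a k] if_P[OF refl] s2 Byo_def[of lam k y f a j] ..
  have e5: "?z k = (Bfv lam k f k - Bfv lam k f j)/(lam k - lam j) * ((Bfv lam k f k - Bfv lam k f j) * Byv n lam k x t y f a k - (1 - a k))"
    unfolding Byo_def[of lam j "Byv n lam k x t y f a" "Bfv lam k f" "a(k:=1-a k)" k] by simp
  have e6: "Bfv lam j f j = -f j" by (simp add: Bfv_def)
  have e7: "Bfv lam j f k = -f j - (lam k - lam j)/(f k - f j)" using kj by (simp add: Bfv_def)
  have e8: "Byv n lam j x t y f a j = -y j + 6*t*((f j)\<^sup>2 + lam j) - x - (((f k - f j)/(lam k - lam j)*((f k - f j)*y k - a k) + y k) + (?Pj + ?P))"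
    unfolding Byv_def[of n lam j x t y f a j] if_P[OF refl] s3 Byo_def[of lam j y f a k] ..
  have "Byv n lam j x t (Byv n lam k x t y f a) (Bfv lam k f) (a(k:=1-a k)) j
     = -Byv n lam k x t y f a j + 6*t*((Bfv lam k f j)\<^sup>2 + lam j) - x - ((?z k + Byv n lam k x t y f a k) + (?Z + ?Pk))"
    unfolding Byv_def[of n lam j x t "Byv n lam k x t y f a" "Bfv lam k f" "a(k:=1-a k)" j] if_P[OF refl] s1 ..
  also have "\<dots> = ((-f j) - (-f j - (lam k - lam j)/(f k - f j)))/(lam j - lam k) * (((-f j) - (-f j - (lam k - lam j)/(f k - f j)))
        * (-y j + 6*t*((f j)\<^sup>2+lam j) - x - ((((f k - f j)/(lam k - lam j)*((f k - f j)*y k - a k)) + y k) + (?Pj + ?P))) - (1 - a j))"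
    unfolding e5 e1 e2 e3 e4 by (rule algC5[OF B Ljk HZ])
  also have "\<dots> = Byo lam k (Byv n lam j x t y f a) (Bfv lam j f) (a(j:=1-a j)) j"
    unfolding Byo_def[of lam k "Byv n lam j x t y f a" "Bfv lam j f" "a(j:=1-a j)" j] e6 e7 e8 by simp
  finally show ?thesis .
qed

end


lemma B_ok_map: "B_ok n j (B_map n lam k x t (y,f,a)) = (\<forall>i\<in>{1..n}-{j}. Bfv lam k f i \<noteq> Bfv lam k f j)"
  by (simp add: B_ok_def B_map_eq)

lemma B_comm:
  assumes jk: "j \<noteq> k" and j: "j \<in> {1..n}" and k: "k \<in> {1..n}"
    and lamd: "\<forall>i\<in>{1..n}. \<forall>j\<in>{1..n}. i \<noteq> j \<longrightarrow> lam i \<noteq> lam j"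
    and h: "B_ok n k s \<and> B_ok n j (B_map n lam k x t s) \<and> B_ok n j s \<and> B_ok n k (B_map n lam j x t s)"
  shows "eq_on n (B_map n lam j x t (B_map n lam k x t s)) (B_map n lam k x t (B_map n lam j x t s))"
proof -
  obtain y f a where s: "s = (y,f,a)" by (cases s) auto
  interpret b1: bcomm n lam j k y f a x t
    by unfold_locales (use jk j k lamd h in \<open>simp_all add: s B_ok_eq B_ok_map\<close>)
  interpret b2: bcomm n lam k j y f a x t
    by unfold_locales (use jk j k lamd h in \<open>simp_all add: s B_ok_eq B_ok_map\<close>)
  show ?thesis unfolding s B_map_eq eq_on_def
  proof (intro ballI, simp only: fst_conv snd_conv, intro conjI)
    fix i assume i: "i \<in> {1..n}"
    show "Byv n lam j x t (Byv n lam k x t y f a) (Bfv lam k f) (a(k := 1 - a k)) i =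
          Byv n lam k x t (Byv n lam j x t y f a) (Bfv lam j f) (a(j := 1 - a j)) i"
    proof (cases "i = j")
      case True then show ?thesis using b1.compy jk by (simp add: Byv_def[of n lam k x t "Byv n lam j x t y f a"])
    next
      case False
      show ?thesis
      proof (cases "i = k")
        case True then show ?thesis using b2.compy jk by (simp add: Byv_def[of n lam j x t "Byv n lam k x t y f a"])
      next
        case False2: False
        then have "i \<in> {1..n}-{j,k}" using i False by auto
        then show ?thesis using b1.other(2) False False2 by (simp add: Byv_def)
      qed
    qed
    show "Bfv lam j (Bfv lam k f) i = Bfv lam k (Bfv lam j f) i"
    proof (cases "i = j")
      case True then show ?thesis using b1.compf by simp
    next
      case False
      show ?thesis
      proof (cases "i = k")
        case True then show ?thesis using b2.compf by simp
      next
        case False2: False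
        then have "i \<in> {1..n}-{j,k}" using i False by auto
        then show ?thesis using b1.other(1) by simp
      qed
    qed
    show "((a(k := 1 - a k))(j := 1 - (a(k := 1 - a k)) j)) i = ((a(j := 1 - a j))(k := 1 - (a(j := 1 - a j)) k)) i"
      using jk by simp
  qed
qed

lemma algAB:
  fixes fj fk yj aj lj lk :: complex
  assumes D: "fj - fk \<noteq> 0" and Y: "yj \<noteq> 0" and L: "lj - lk \<noteq> 0" and N: "(fj - fk)*yj - aj \<noteq> 0"
  shows "(fj - fk)/(lj - lk)*((fj - fk)*yj - aj) = ((fj - aj/yj) - fk)/(lj - lk)*(((fj - aj/yj) - fk)*yj - (-aj))"
    "-fk - (lj - lk)/(fj - fk) - aj/((fj - fk)/(lj - lk)*((fj - fk)*yj - aj)) = -fk - (lj - lk)/((fj - aj/yj) - fk)"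
proof -
  have N2: "(fj - aj/yj) - fk \<noteq> 0"
  proof
    assume "(fj - aj/yj) - fk = 0"
    then have "((fj - aj/yj) - fk)*yj = 0" by simp
    then have "(fj - fk)*yj - aj = 0" using Y by (simp add: algebra_simps)
    with N show False by simp
  qed
  note f = invI[OF D] invI[OF Y] invI[OF L] invI[OF N] invI[OF N2]
  show "(fj - fk)/(lj - lk)*((fj - fk)*yj - aj) = ((fj - aj/yj) - fk)/(lj - lk)*(((fj - aj/yj) - fk)*yj - (-aj))"
    using f unfolding divide_inverse by algebra
  show "-fk - (lj - lk)/(fj - fk) - aj/((fj - fk)/(lj - lk)*((fj - fk)*yj - aj)) = -fk - (lj - lk)/((fj - aj/yj) - fk)"
    using f unfolding divide_inverse inverse_mult_distrib inverse_inverse_eq by algebra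
qed

lemma A_map_eq: "A_map k (y,f,a) = (y, f(k := f k - a k / y k), a(k := - a k))"
  by (simp add: A_map_def)

lemma AB_comm:
  assumes jk: "j \<noteq> k" and j: "j \<in> {1..n}" and k: "k \<in> {1..n}"
    and lamd: "\<forall>i\<in>{1..n}. \<forall>j\<in>{1..n}. i \<noteq> j \<longrightarrow> lam i \<noteq> lam j"
    and h: "B_ok n k s \<and> A_ok j (B_map n lam k x t s) \<and> A_ok j s \<and> B_ok n k (A_map j s)"
  shows "eq_on n (A_map j (B_map n lam k x t s)) (B_map n lam k x t (A_map j s))"
proof -
  obtain y f a where s: "s = (y,f,a)" by (cases s) auto
  have D: "f j - f k \<noteq> 0" using h j jk by (auto simp: s B_ok_eq intro!: sub0)
  have L: "lam j - lam k \<noteq> 0" using lamd j k jk by (auto intro!: sub0)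
  have Y: "y j \<noteq> 0" using h by (simp add: s A_ok_def)
  have Byj: "Byo lam k y f a j \<noteq> 0" using h jk by (simp add: s A_ok_def B_map_eq Byv_def)
  then have N: "(f j - f k)*y j - a j \<noteq> 0" by (auto simp: Byo_def)
  note ab = algAB[OF D Y L N]
  have yo: "Byo lam k y (f(j := f j - a j / y j)) (a(j := - a j)) i = Byo lam k y f a i" if "i \<in> {1..n}" for i
  proof (cases "i = j")
    case True then show ?thesis using ab(1)[symmetric] jk by (simp add: Byo_def)
  next
    case False then show ?thesis using jk by (simp add: Byo_def)
  qed
  show ?thesis unfolding s B_map_eq A_map_eq eq_on_def
  proof (intro ballI, simp only: fst_conv snd_conv, intro conjI)
    fix i assume i: "i \<in> {1..n}"
    have ss: "(\<Sum>l\<in>{1..n}-{k}. Byo lam k y (f(j := f j - a j / y j)) (a(j := - a j)) l + y l) = (\<Sum>l\<in>{1..n}-{k}. Byo lam k y f a l + y l)"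
      by (rule sum.cong) (auto simp: yo)
    show "Byv n lam k x t y f a i = Byv n lam k x t y (f(j := f j - a j / y j)) (a(j := - a j)) i"
      using yo[OF i] ss jk by (simp add: Byv_def)
    show "((Bfv lam k f)(j := Bfv lam k f j - (a(k := 1 - a k)) j / Byv n lam k x t y f a j)) i = Bfv lam k (f(j := f j - a j / y j)) i"
    proof (cases "i = j")
      case True then show ?thesis using ab(2) jk by (simp add: Bfv_def Byv_def Byo_def)
    next
      case False then show ?thesis using jk by (simp add: Bfv_def)
    qed
    show "((a(k := 1 - a k))(j := - (a(k := 1 - a k)) j)) i = ((a(j := - a j))(k := 1 - (a(j := - a j)) k)) i"
      using jk by simp
  qed
qed



lemma trY_A: "trY (\<lambda>x t. A_map k) a Y F = Y"
  by (simp add: fun_eq_iff trY_def A_map_def)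
lemma trF_A: "trF (\<lambda>x t. A_map k) a Y F = FA k a Y F"
  by (simp add: fun_eq_iff trF_def A_map_def FA_def)
lemma trY_B: "trY (B_map n lam k) a Y F = YB n lam a Y F k"
  by (simp add: fun_eq_iff trY_def B_map_eq Byv_def Byo_def YB_def yoB_def)
lemma trF_B: "trF (B_map n lam k) a Y F = FB lam F k"
  by (simp add: fun_eq_iff trF_def B_map_eq Bfv_def FB_def FBf_def)

theorem mainTheorem5:
  fixes n :: nat and lam :: "nat \<Rightarrow> complex"
  assumes n1: "n \<ge> 1"
    and lam_distinct: "\<forall>i\<in>{1..n}. \<forall>j\<in>{1..n}. i \<noteq> j \<longrightarrow> lam i \<noteq> lam j"
  shows
    \<comment> \<open>A_k maps solutions to solutions\<close>
    "(\<forall>k\<in>{1..n}. \<forall>(a::nat \<Rightarrow> complex) U Y F.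
        open U \<longrightarrow> (\<forall>(x,t)\<in>U. t \<noteq> 0) \<longrightarrow> is_solution n lam a U Y F \<longrightarrow>
        (\<forall>(x,t)\<in>U. Y k x t \<noteq> 0) \<longrightarrow>
        is_solution n lam (a(k := - a k)) U
           (trY (\<lambda>x t. A_map k) a Y F) (trF (\<lambda>x t. A_map k) a Y F))
   \<and> \<comment> \<open>B_k maps solutions to solutions\<close>
    (\<forall>k\<in>{1..n}. \<forall>(a::nat \<Rightarrow> complex) U Y F.
        open U \<longrightarrow> (\<forall>(x,t)\<in>U. t \<noteq> 0) \<longrightarrow> is_solution n lam a U Y F \<longrightarrow>
        (\<forall>(x,t)\<in>U. \<forall>j\<in>{1..n} - {k}. F j x t \<noteq> F k x t) \<longrightarrow>
        is_solution n lam (a(k := 1 - a k)) U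
           (trY (B_map n lam k) a Y F) (trF (B_map n lam k) a Y F))
   \<and> \<comment> \<open>A_k^2 = id\<close>
    (\<forall>k\<in>{1..n}. \<forall>s. A_ok k s \<and> A_ok k (A_map k s) \<longrightarrow> eq_on n (A_map k (A_map k s)) s)
   \<and> \<comment> \<open>A_j A_k = A_k A_j\<close>
    (\<forall>j\<in>{1..n}. \<forall>k\<in>{1..n}. j \<noteq> k \<longrightarrow> (\<forall>s.
        A_ok k s \<and> A_ok j (A_map k s) \<and> A_ok j s \<and> A_ok k (A_map j s) \<longrightarrow>
        eq_on n (A_map j (A_map k s)) (A_map k (A_map j s))))
   \<and> \<comment> \<open>B_k^2 = id\<close>
    (\<forall>k\<in>{1..n}. \<forall>x t s. B_ok n k s \<and> B_ok n k (B_map n lam k x t s) \<longrightarrow>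
        eq_on n (B_map n lam k x t (B_map n lam k x t s)) s)
   \<and> \<comment> \<open>B_j B_k = B_k B_j\<close>
    (\<forall>j\<in>{1..n}. \<forall>k\<in>{1..n}. j \<noteq> k \<longrightarrow> (\<forall>x t s.
        B_ok n k s \<and> B_ok n j (B_map n lam k x t s) \<and> B_ok n j s \<and> B_ok n k (B_map n lam j x t s) \<longrightarrow>
        eq_on n (B_map n lam j x t (B_map n lam k x t s)) (B_map n lam k x t (B_map n lam j x t s))))
   \<and> \<comment> \<open>A_j B_k = B_k A_j\<close>
    (\<forall>j\<in>{1..n}. \<forall>k\<in>{1..n}. j \<noteq> k \<longrightarrow> (\<forall>x t s.
        B_ok n k s \<and> A_ok j (B_map n lam k x t s) \<and> A_ok j s \<and> B_ok n k (A_map j s) \<longrightarrow>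
        eq_on n (A_map j (B_map n lam k x t s)) (B_map n lam k x t (A_map j s))))"
proof (intro conjI)
  show "\<forall>k\<in>{1..n}. \<forall>(a::nat \<Rightarrow> complex) U Y F.
        open U \<longrightarrow> (\<forall>(x,t)\<in>U. t \<noteq> 0) \<longrightarrow> is_solution n lam a U Y F \<longrightarrow>
        (\<forall>(x,t)\<in>U. Y k x t \<noteq> 0) \<longrightarrow>
        is_solution n lam (a(k := - a k)) U
           (trY (\<lambda>x t. A_map k) a Y F) (trF (\<lambda>x t. A_map k) a Y F)"
  proof (intro ballI allI impI)
    fix k a U Y F assume k: "k \<in> {1..n}" and U: "open U" and t: "\<forall>(x,t)\<in>U. t \<noteq> 0"
      and S: "is_solution n lam a U Y F" and Y0: "\<forall>(x,t)\<in>U. Y k x t \<noteq> 0"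
    have S2: "sol2 n lam a U Y F" using S char[OF U t] by simp
    have "sol2 n lam (a(k := - a k)) U Y (FA k a Y F)" by (rule A_sol[OF U t S2 k Y0])
    then show "is_solution n lam (a(k := - a k)) U (trY (\<lambda>x t. A_map k) a Y F) (trF (\<lambda>x t. A_map k) a Y F)"
      unfolding trY_A trF_A using char[OF U t] by simp
  qed
  show "\<forall>k\<in>{1..n}. \<forall>(a::nat \<Rightarrow> complex) U Y F.
        open U \<longrightarrow> (\<forall>(x,t)\<in>U. t \<noteq> 0) \<longrightarrow> is_solution n lam a U Y F \<longrightarrow>
        (\<forall>(x,t)\<in>U. \<forall>j\<in>{1..n} - {k}. F j x t \<noteq> F k x t) \<longrightarrow>
        is_solution n lam (a(k := 1 - a k)) U
           (trY (B_map n lam k) a Y F) (trF (B_map n lam k) a Y F)"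
  proof (intro ballI allI impI)
    fix k a U Y F assume k: "k \<in> {1..n}" and U: "open U" and t: "\<forall>(x,t)\<in>U. t \<noteq> 0"
      and S: "is_solution n lam a U Y F" and Fd: "\<forall>(x,t)\<in>U. \<forall>j\<in>{1..n} - {k}. F j x t \<noteq> F k x t"
    have S2: "sol2 n lam a U Y F" using S char[OF U t] by simp
    have "sol2 n lam (a(k := 1 - a k)) U (YB n lam a Y F k) (FB lam F k)"
      by (rule B_sol[OF U t S2 k lam_distinct Fd])
    then show "is_solution n lam (a(k := 1 - a k)) U (trY (B_map n lam k) a Y F) (trF (B_map n lam k) a Y F)"
      unfolding trY_B trF_B using char[OF U t] by simp
  qed
  show "\<forall>k\<in>{1..n}. \<forall>s. A_ok k s \<and> A_ok k (A_map k s) \<longrightarrow> eq_on n (A_map k (A_map k s)) s"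
  proof (intro ballI allI impI)
    fix k s assume "k \<in> {1..n}" "A_ok k s \<and> A_ok k (A_map k s)"
    obtain y f a where s: "s = (y,f,a)" by (cases s) auto
    show "eq_on n (A_map k (A_map k s)) s"
      unfolding s A_map_eq eq_on_def by (simp add: diff_divide_distrib[symmetric])
  qed
  show "\<forall>j\<in>{1..n}. \<forall>k\<in>{1..n}. j \<noteq> k \<longrightarrow> (\<forall>s.
        A_ok k s \<and> A_ok j (A_map k s) \<and> A_ok j s \<and> A_ok k (A_map j s) \<longrightarrow>
        eq_on n (A_map j (A_map k s)) (A_map k (A_map j s)))"
  proof (intro ballI allI impI)
    fix j k :: nat and s :: st assume jk: "j \<noteq> k"
    obtain y f a where s: "s = (y,f,a)" by (cases s) auto
    show "eq_on n (A_map j (A_map k s)) (A_map k (A_map j s))"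
      unfolding s A_map_eq eq_on_def using jk by (simp add: fun_upd_twist)
  qed
  show "\<forall>k\<in>{1..n}. \<forall>x t s. B_ok n k s \<and> B_ok n k (B_map n lam k x t s) \<longrightarrow>
        eq_on n (B_map n lam k x t (B_map n lam k x t s)) s"
  proof (intro ballI allI impI)
    fix k x t s assume k: "k \<in> {1..n}" and h: "B_ok n k s \<and> B_ok n k (B_map n lam k x t s)"
    obtain y f a where s: "s = (y,f,a)" by (cases s) auto
    show "eq_on n (B_map n lam k x t (B_map n lam k x t s)) s"
      unfolding s by (rule B_invol[OF k lam_distinct]) (use h in \<open>simp add: s B_ok_eq\<close>)
  qed
  show "\<forall>j\<in>{1..n}. \<forall>k\<in>{1..n}. j \<noteq> k \<longrightarrow> (\<forall>x t s.
        B_ok n k s \<and> B_ok n j (B_map n lam k x t s) \<and> B_ok n j s \<and> B_ok n k (B_map n lam j x t s) \<longrightarrow>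
        eq_on n (B_map n lam j x t (B_map n lam k x t s)) (B_map n lam k x t (B_map n lam j x t s)))"
    using B_comm[OF _ _ _ lam_distinct] by blast
  show "\<forall>j\<in>{1..n}. \<forall>k\<in>{1..n}. j \<noteq> k \<longrightarrow> (\<forall>x t s.
        B_ok n k s \<and> A_ok j (B_map n lam k x t s) \<and> A_ok j s \<and> B_ok n k (A_map j s) \<longrightarrow>
        eq_on n (A_map j (B_map n lam k x t s)) (B_map n lam k x t (A_map j s)))"
    using AB_comm[OF _ _ _ lam_distinct] by blast
qed


end
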